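(* Let $G=(V,E)$ be a geodetic graph and let $(S,T)$ be a partition of $V$ into two sets such that: (1) $S$ and $T$ are geodetically closed, i.e., for all $u,v\in S$ the shortest path from $u$ to $v$ contains only vertices of $S$, and likewise for $T$; (2) for any two distinct edges $\{u,v\}$ and $\{w,x\}$ of the cut set with $u,w\in S$ and $v,x\in T$, the number $d(u,w)+d(v,x)$ is odd. Then for every integer $k\ge 0$, the graph $G'$ obtained from $G$ by subdividing every edge of the cut set with $k$ new vertices (i.e., replacing each such edge by a path of length $k+1$) is geodetic.
   Context: All graphs are finite, simple and undirected; $d(u,v)$ denotes the distance in $G$. A graph is geodetic if between any two vertices there is at most one shortest path. The cut set of the partition $(S,T)$ is the set of edges of $G$ with one endpoint in $S$ and the other in $T$. *)

theory Defs
  imports Main "HOL-Library.Extended_Nat"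
begin

definition simple_graph :: "'a set \<Rightarrow> 'a set set \<Rightarrow> bool" where
  "simple_graph V E \<longleftrightarrow> finite V \<and>
     (\<forall>e\<in>E. \<exists>u v. e = {u, v} \<and> u \<noteq> v \<and> u \<in> V \<and> v \<in> V)"

definition walk :: "'a set \<Rightarrow> 'a set set \<Rightarrow> 'a list \<Rightarrow> bool" where
  "walk V E p \<longleftrightarrow> p \<noteq> [] \<and> set p \<subseteq> V \<and>
     (\<forall>i. Suc i < length p \<longrightarrow> {p ! i, p ! Suc i} \<in> E)"

definition dist :: "'a set \<Rightarrow> 'a set set \<Rightarrow> 'a \<Rightarrow> 'a \<Rightarrow> enat" where
  "dist V E u v = Inf {enat (length p - 1) | p. walk V E p \<and> hd p = u \<and> last p = v}"

definition shortest_path :: "'a set \<Rightarrow> 'a set set \<Rightarrow> 'a \<Rightarrow> 'a \<Rightarrow> 'a list \<Rightarrow> bool" where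
  "shortest_path V E u v p \<longleftrightarrow> walk V E p \<and> hd p = u \<and> last p = v \<and>
     enat (length p - 1) = dist V E u v"

definition geodetic :: "'a set \<Rightarrow> 'a set set \<Rightarrow> bool" where
  "geodetic V E \<longleftrightarrow> (\<forall>u\<in>V. \<forall>v\<in>V. \<forall>p q.
     shortest_path V E u v p \<and> shortest_path V E u v q \<longrightarrow> p = q)"

definition geodetically_closed :: "'a set \<Rightarrow> 'a set set \<Rightarrow> 'a set \<Rightarrow> bool" where
  "geodetically_closed V E S \<longleftrightarrow> (\<forall>u\<in>S. \<forall>v\<in>S. \<forall>p.
     shortest_path V E u v p \<longrightarrow> set p \<subseteq> S)"

definition cut_set :: "'a set set \<Rightarrow> 'a set \<Rightarrow> 'a set \<Rightarrow> 'a set set" where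
  "cut_set E S T = {e \<in> E. \<exists>u\<in>S. \<exists>v\<in>T. e = {u, v}}"

definition cut_pairs :: "'a set set \<Rightarrow> 'a set \<Rightarrow> 'a set \<Rightarrow> ('a \<times> 'a) set" where
  "cut_pairs E S T = {(u, v). u \<in> S \<and> v \<in> T \<and> {u, v} \<in> E}"

text \<open>The i-th vertex (0 \<le> i \<le> k+1) on the path of length k+1 replacing cut edge (u,v).\<close>
definition sub_node :: "nat \<Rightarrow> 'a \<Rightarrow> 'a \<Rightarrow> nat \<Rightarrow> 'a + ('a \<times> 'a \<times> nat)" where
  "sub_node k u v i = (if i = 0 then Inl u else if i = Suc k then Inl v else Inr (u, v, i))"

definition subdiv_V :: "'a set \<Rightarrow> 'a set set \<Rightarrow> 'a set \<Rightarrow> 'a set \<Rightarrow> nat \<Rightarrow> ('a + ('a \<times> 'a \<times> nat)) set" where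
  "subdiv_V V E S T k = Inl ` V \<union>
     {Inr (u, v, i) | u v i. (u, v) \<in> cut_pairs E S T \<and> 1 \<le> i \<and> i \<le> k}"

definition subdiv_E :: "'a set set \<Rightarrow> 'a set \<Rightarrow> 'a set \<Rightarrow> nat \<Rightarrow> ('a + ('a \<times> 'a \<times> nat)) set set" where
  "subdiv_E E S T k =
     {{Inl a, Inl b} | a b. {a, b} \<in> E - cut_set E S T} \<union>
     {{sub_node k u v i, sub_node k u v (Suc i)} | u v i. (u, v) \<in> cut_pairs E S T \<and> i \<le> k}"

end

theory Submission
  imports Defs
begin

lemma walk_single: "x \<in> V \<Longrightarrow> walk V E [x]"
  by (simp add: walk_def)

lemma walk_snoc:
  assumes "walk V E p" "{last p, y} \<in> E" "y \<in> V"
  shows "walk V E (p @ [y])"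
  unfolding walk_def
proof (intro conjI allI impI)
  show "p @ [y] \<noteq> []" by simp
  show "set (p @ [y]) \<subseteq> V" using assms by (auto simp: walk_def)
  fix i assume i: "Suc i < length (p @ [y])"
  show "{(p @ [y]) ! i, (p @ [y]) ! Suc i} \<in> E"
  proof (cases "Suc i < length p")
    case True then show ?thesis using assms(1) by (auto simp: walk_def nth_append)
  next
    case False
    then have "i = length p - 1" "p \<noteq> []" using i assms(1) by (auto simp: walk_def)
    then show ?thesis using assms(2) by (auto simp: nth_append last_conv_nth)
  qed
qed

lemma walk_take:
  assumes "walk V E p" "i < length p"
  shows "walk V E (take (Suc i) p)"
  using assms unfolding walk_def by (auto dest: in_set_takeD)

lemma walk_drop:
  assumes "walk V E p" "i < length p"
  shows "walk V E (drop i p)"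
  using assms unfolding walk_def by (auto dest: in_set_dropD simp: add.commute)

lemma walk_rev:
  assumes "walk V E p" shows "walk V E (rev p)"
  unfolding walk_def
proof (intro conjI allI impI)
  show "rev p \<noteq> []" "set (rev p) \<subseteq> V" using assms by (auto simp: walk_def)
  fix i assume i: "Suc i < length (rev p)"
  let ?j = "length p - Suc (Suc i)"
  have "{p ! ?j, p ! Suc ?j} \<in> E" using assms i by (auto simp: walk_def)
  moreover have "rev p ! i = p ! Suc ?j" "rev p ! Suc i = p ! ?j" using i
    by (auto simp: rev_nth Suc_diff_Suc)
  ultimately show "{rev p ! i, rev p ! Suc i} \<in> E" by (simp add: insert_commute)
qed

lemma walk_append:
  assumes "walk V E p" "walk V E q" "last p = hd q"
  shows "walk V E (p @ tl q)"
  using assms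
proof (induction q arbitrary: p rule: rev_induct)
  case Nil then show ?case by (simp add: walk_def)
next
  case (snoc x xs)
  show ?case
  proof (cases "xs = []")
    case True then show ?thesis using snoc by simp
  next
    case False
    have wxs: "walk V E xs" unfolding walk_def
    proof (intro conjI allI impI)
      show "xs \<noteq> []" "set xs \<subseteq> V" using False snoc(3) by (auto simp: walk_def)
      fix i assume i: "Suc i < length xs"
      then have "{(xs@[x])!i, (xs@[x])! Suc i} \<in> E" using snoc(3) unfolding walk_def by simp
      then show "{xs ! i, xs ! Suc i} \<in> E" using i by (simp add: nth_append)
    qed
    have "hd xs = hd (xs @ [x])" using False by simp
    then have IH: "walk V E (p @ tl xs)" using snoc wxs by simp
    have "{last xs, x} \<in> E"
    proof -
      have "Suc (length xs - 1) < length (xs @ [x])" using False by simp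
      then have "{(xs@[x]) ! (length xs - 1), (xs@[x]) ! Suc (length xs - 1)} \<in> E"
        using snoc(3) unfolding walk_def by blast
      then show ?thesis using False by (simp add: nth_append last_conv_nth)
    qed
    moreover have "last (p @ tl xs) = last xs"
    proof (cases "tl xs = []")
      case True
      then have "xs = [hd xs]" using False by (cases xs) auto
      then show ?thesis using snoc(4) True \<open>hd xs = hd (xs @ [x])\<close> by (metis last.simps append_Nil2)
    next
      case F2: False
      then show ?thesis using False by (simp add: last_tl)
    qed
    moreover have "x \<in> V" using snoc(3) by (auto simp: walk_def)
    ultimately have "walk V E ((p @ tl xs) @ [x])" using walk_snoc IH by metis
    then show ?thesis using False by simp
  qed
qed

lemma dist_le_walk:
  assumes "walk V E p" "hd p = u" "last p = v"
  shows "dist V E u v \<le> enat (length p - 1)"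
  unfolding dist_def by (rule Inf_lower) (use assms in blast)

lemma dist_attained:
  assumes "dist V E u v \<noteq> \<infinity>"
  shows "\<exists>p. shortest_path V E u v p"
proof -
  let ?A = "{enat (length p - 1) | p. walk V E p \<and> hd p = u \<and> last p = v}"
  have "?A \<noteq> {}"
  proof
    assume "?A = {}"
    have "dist V E u v = Inf ?A" by (simp only: dist_def)
    also have "\<dots> = \<infinity>" unfolding \<open>?A = {}\<close> by (simp add: top_enat_def)
    finally show False using assms by simp
  qed
  then have "Inf ?A \<in> ?A" by (meson ex_in_conv wellorder_InfI)
  then show ?thesis unfolding shortest_path_def dist_def by auto
qed

lemma shortest_path_walk: "shortest_path V E u v p \<Longrightarrow> walk V E p \<and> hd p = u \<and> last p = v"
  by (simp add: shortest_path_def)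

lemma dist_ge_walk_bound:
  assumes "\<And>p. walk V E p \<Longrightarrow> hd p = u \<Longrightarrow> last p = v \<Longrightarrow> f \<le> enat (length p - 1)"
  shows "f \<le> dist V E u v"
  unfolding dist_def by (rule Inf_greatest) (use assms in blast)

lemma dist_self: "u \<in> V \<Longrightarrow> dist V E u u = 0"
  using dist_le_walk[of V E "[u]" u u] walk_single[of u V E] by (simp add: zero_enat_def[symmetric])

lemma dist_zero: assumes "dist V E u v = 0" shows "u = v"
proof -
  obtain p where "shortest_path V E u v p" using dist_attained[of V E u v] assms by auto
  then have "walk V E p" "hd p = u" "last p = v" "length p - 1 = 0"
    using assms by (auto simp: shortest_path_def zero_enat_def)
  then have "length p = 1" by (cases p) (auto simp: walk_def)
  then show ?thesis using \<open>hd p = u\<close> \<open>last p = v\<close>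
    by (cases p) auto
qed

lemma dist_sym: "dist V E u v \<le> dist V E v u"
proof (cases "dist V E v u = \<infinity>")
  case False
  then obtain p where p: "shortest_path V E v u p" using dist_attained[of V E v u] by auto
  then have "walk V E (rev p)" "hd (rev p) = u" "last (rev p) = v"
    by (auto simp: shortest_path_def walk_rev hd_rev last_rev)
  then have "dist V E u v \<le> enat (length (rev p) - 1)" by (rule dist_le_walk)
  then show ?thesis using p by (simp add: shortest_path_def)
qed simp

lemma dist_commute: "dist V E u v = dist V E v u"
  using dist_sym by (metis antisym)

lemma dist_triangle: "dist V E u w \<le> dist V E u v + dist V E v w"
proof (cases "dist V E u v = \<infinity> \<or> dist V E v w = \<infinity>")
  case False
  then obtain p q where p: "shortest_path V E u v p" and q: "shortest_path V E v w q"
    using dist_attained[of V E u v] dist_attained[of V E v w] by auto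
  then have w: "walk V E (p @ tl q)" using walk_append by (metis shortest_path_def)
  have ne: "p \<noteq> []" "q \<noteq> []" using p q by (auto simp: shortest_path_def walk_def)
  have "hd (p @ tl q) = u" using p ne by (simp add: shortest_path_def)
  moreover have "last (p @ tl q) = w"
  proof (cases "tl q = []")
    case True
    then have "q = [hd q]" using ne by (cases q) auto
    then show ?thesis using p q True by (simp add: shortest_path_def)
  next
    case False
    then show ?thesis using ne q by (simp add: last_tl shortest_path_def)
  qed
  ultimately have "dist V E u w \<le> enat (length (p @ tl q) - 1)" using w dist_le_walk by metis
  also have "\<dots> = enat (length p - 1) + enat (length q - 1)" using ne by (cases p; cases q) auto
  finally have "dist V E u w \<le> enat (length p - 1) + enat (length q - 1)" .
  moreover have "enat (length p - 1) = dist V E u v" "enat (length q - 1) = dist V E v w"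
    using p q by (simp_all add: shortest_path_def)
  ultimately show ?thesis by metis
qed auto

lemma dist_edge:
  assumes "{y, z} \<in> E" "z \<in> V"
  shows "dist V E x z \<le> dist V E x y + 1"
proof (cases "dist V E x y = \<infinity>")
  case False
  then obtain p where p: "shortest_path V E x y p" using dist_attained[of V E x y] by auto
  then have "walk V E (p @ [z])" using walk_snoc assms by (metis shortest_path_def)
  moreover have "p \<noteq> []" using p by (auto simp: shortest_path_def walk_def)
  ultimately have "dist V E x z \<le> enat (length (p @ [z]) - 1)"
    using p dist_le_walk by (metis hd_append2 last_snoc shortest_path_def)
  moreover have "enat (length (p @ [z]) - 1) = enat (length p - 1) + 1"
    using \<open>p \<noteq> []\<close> by (simp add: one_enat_def)
  ultimately show ?thesis using p by (simp add: shortest_path_def)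
qed simp


lemma walk_ne: "walk V E p \<Longrightarrow> p \<noteq> []"
  by (simp add: walk_def)

lemma walk_hd_V: "walk V E p \<Longrightarrow> hd p \<in> V"
  unfolding walk_def by (meson hd_in_set subsetD)

lemma walk_last_V: "walk V E p \<Longrightarrow> last p \<in> V"
  unfolding walk_def by (meson last_in_set subsetD)

lemma walk_nth_edge: "walk V E p \<Longrightarrow> Suc i < length p \<Longrightarrow> {p ! i, p ! Suc i} \<in> E"
  by (simp add: walk_def)

lemma walk_nth_V: "walk V E p \<Longrightarrow> i < length p \<Longrightarrow> p ! i \<in> V"
  by (auto simp: walk_def)

lemma potential_lower:
  assumes zero: "F s = 0"
    and lip: "\<And>b c. {b,c} \<in> E \<Longrightarrow> F c \<le> F b + 1"
    and w: "walk V E p" "hd p = s"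
  shows "n < length p \<Longrightarrow> F (p ! n) \<le> enat n"
proof (induction n)
  case 0
  then show ?case using w zero by (cases p) (auto simp: zero_enat_def)
next
  case (Suc n)
  then have "{p ! n, p ! Suc n} \<in> E" using w walk_nth_edge by blast
  then have "F (p ! Suc n) \<le> F (p ! n) + 1" using lip by blast
  also have "\<dots> \<le> enat n + 1" using Suc by (simp add: add_right_mono)
  finally show ?case by (simp add: eSuc_enat[symmetric] eSuc_plus_1)
qed

lemma potential_dist:
  assumes src: "s \<in> V" and zero: "F s = 0"
    and lip: "\<And>b c. {b,c} \<in> E \<Longrightarrow> F c \<le> F b + 1"
    and desc: "\<And>b. b \<in> V \<Longrightarrow> b \<noteq> s \<Longrightarrow> F b \<noteq> \<infinity> \<Longrightarrow> \<exists>c\<in>V. {b,c} \<in> E \<and> F c + 1 \<le> F b"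
    and b: "b \<in> V"
  shows "dist V E s b = F b"
proof (rule antisym)
  show "F b \<le> dist V E s b"
  proof (rule dist_ge_walk_bound)
    fix p assume p: "walk V E p" "hd p = s" "last p = b"
    then have "p \<noteq> []" by (simp add: walk_def)
    then have "last p = p ! (length p - 1)" by (simp add: last_conv_nth)
    then show "F b \<le> enat (length p - 1)"
      using potential_lower[where F=F and s=s and E=E and V=V and p=p and n="length p - 1", OF zero lip p(1,2)] p(3) \<open>p \<noteq> []\<close> by simp
  qed
next
  have main: "\<And>b. b \<in> V \<Longrightarrow> F b = enat m \<Longrightarrow> \<exists>p. walk V E p \<and> hd p = s \<and> last p = b \<and> length p - 1 \<le> m" for m
  proof (induction m rule: less_induct)
    case (less m)
    show ?case
    proof (cases "b = s")
      case True
      then show ?thesis using walk_single[OF src, of E] by (intro exI[of _ "[s]"]) auto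
    next
      case False
      then obtain c where c: "c \<in> V" "{b,c} \<in> E" "F c + 1 \<le> F b" using desc[OF less.prems(1) False] less.prems(2) by auto
      then obtain m' where m': "F c = enat m'" "m' < m" using less.prems
        by (cases "F c") (auto simp: one_enat_def)
      then obtain p where p: "walk V E p" "hd p = s" "last p = c" "length p - 1 \<le> m'"
        using less.IH c(1) by blast
      have "walk V E (p @ [b])" using walk_snoc[OF p(1)] p(3) c(2) less.prems(1)
        by (simp add: insert_commute)
      moreover have "p \<noteq> []" using p(1) by (simp add: walk_def)
      ultimately show ?thesis using p m' by (intro exI[of _ "p @ [b]"]) auto
    qed
  qed
  show "dist V E s b \<le> F b"
  proof (cases "F b")
    case (enat m)
    then obtain p where "walk V E p \<and> hd p = s \<and> last p = b \<and> length p - 1 \<le> m"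
      using main b by blast
    then have "dist V E s b \<le> enat (length p - 1)" "enat (length p - 1) \<le> enat m"
      using dist_le_walk[of V E p s b] by auto
    then show ?thesis unfolding enat by (rule order_trans)
  qed simp
qed

lemma shortest_butlast:
  assumes p: "shortest_path V E a b p" and len: "length p \<ge> 2"
  shows "shortest_path V E a (last (butlast p)) (butlast p)
         \<and> {last (butlast p), b} \<in> E \<and> dist V E a (last (butlast p)) + 1 = dist V E a b"
proof -
  let ?c = "last (butlast p)"
  have w: "walk V E p" and h: "hd p = a" and l: "last p = b"
    and d: "enat (length p - 1) = dist V E a b" using p by (auto simp: shortest_path_def)
  have bl: "butlast p = take (Suc (length p - 2)) p" using len by (simp add: butlast_conv_take Suc_diff_Suc numeral_2_eq_2)
  have wb: "walk V E (butlast p)" unfolding bl by (rule walk_take[OF w]) (use len in simp)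
  have hb: "hd (butlast p) = a" using h len by (simp add: bl hd_take)
  have bne: "butlast p \<noteq> []" using len by (cases p) auto
  have "?c = butlast p ! (length (butlast p) - 1)" using bne by (simp add: last_conv_nth)
  also have "\<dots> = p ! (length p - 2)" using len by (simp add: nth_butlast numeral_2_eq_2)
  finally have cn: "?c = p ! (length p - 2)" .
  have "p \<noteq> []" using len by auto
  then have "b = p ! (length p - 1)" using l by (simp add: last_conv_nth)
  moreover have "Suc (length p - 2) = length p - 1" using len by simp
  ultimately have bn: "b = p ! Suc (length p - 2)" by simp
  have e: "{?c, b} \<in> E" unfolding cn bn by (rule walk_nth_edge[OF w]) (use len in simp)
  have d1: "dist V E a ?c \<le> enat (length (butlast p) - 1)" using dist_le_walk[OF wb hb] by simp
  have "b \<in> V" using w l by (metis last_in_set subsetD walk_def)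
  then have d2: "dist V E a b \<le> dist V E a ?c + 1" using dist_edge[OF e] by blast
  have eqlen: "enat (length (butlast p) - 1) + 1 = enat (length p - 1)"
    using len by (simp add: one_enat_def)
  have "dist V E a ?c + 1 \<le> enat (length (butlast p) - 1) + 1" using d1 by (simp add: add_right_mono)
  also have "\<dots> = dist V E a b" using eqlen d by simp
  finally have "dist V E a ?c + 1 \<le> dist V E a b" .
  then have eq: "dist V E a ?c + 1 = dist V E a b" using d2 by simp
  have "enat (length (butlast p) - 1) = dist V E a ?c"
  proof -
    have "enat (length (butlast p) - 1) + 1 = dist V E a ?c + 1" using eqlen d eq by simp
    then show ?thesis by (metis add.commute enat_add_left_cancel one_enat_def enat.distinct(2)
      plus_1_eSuc(1) eSuc_inject)
  qed
  then show ?thesis using wb hb e eq unfolding shortest_path_def by simp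
qed


lemma shortest_len1:
  assumes "shortest_path V E a b p" "length p \<le> 1"
  shows "p = [a] \<and> b = a"
  using assms by (cases p) (auto simp: shortest_path_def walk_def)

lemma geodetic_crit:
  assumes lipE: "\<And>y z. {y,z} \<in> E \<Longrightarrow> z \<in> V"
    and crit: "\<And>a b c1 c2. a \<in> V \<Longrightarrow> b \<in> V \<Longrightarrow> {c1,b} \<in> E \<Longrightarrow> {c2,b} \<in> E \<Longrightarrow>
       dist V E a b \<noteq> \<infinity> \<Longrightarrow> dist V E a c1 + 1 = dist V E a b \<Longrightarrow>
       dist V E a c2 + 1 = dist V E a b \<Longrightarrow> c1 = c2"
  shows "geodetic V E"
proof -
  have main: "\<And>a b p q. length p = n \<Longrightarrow> shortest_path V E a b p \<Longrightarrow> shortest_path V E a b q \<Longrightarrow> p = q" for n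
  proof (induction n)
    case 0 then show ?case by (auto simp: shortest_path_def walk_def)
  next
    case (Suc n)
    note p = Suc.prems(2) and q = Suc.prems(3)
    have dp: "enat (length p - 1) = dist V E a b" and dq: "enat (length q - 1) = dist V E a b"
      using p q by (auto simp: shortest_path_def)
    then have "enat (length p - 1) = enat (length q - 1)" by simp
    then have lpq: "length p - 1 = length q - 1" by (simp only: enat.inject)
    have nep: "p \<noteq> []" "q \<noteq> []" using p q walk_ne unfolding shortest_path_def by blast+
    then have "0 < length p" "0 < length q" by auto
    then have lq: "length q = length p" using lpq by presburger
    show ?case
    proof (cases "length p \<le> 1")
      case True
      then have "length q \<le> 1" using lq by linarith
      then have "q = [a]" using shortest_len1[OF q] by blast
      moreover have "p = [a]" using shortest_len1[OF p True] by blast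
      ultimately show ?thesis by simp
    next
      case False
      then have len: "length p \<ge> 2" "length q \<ge> 2" using lq by auto
      note bp = shortest_butlast[OF p len(1)] and bq = shortest_butlast[OF q len(2)]
      have aV: "a \<in> V" using p walk_hd_V unfolding shortest_path_def by blast
      have bV: "b \<in> V" using p walk_last_V unfolding shortest_path_def by blast
      have fin: "dist V E a b \<noteq> \<infinity>" using dp by (metis enat.distinct(2))
      have "last (butlast p) = last (butlast q)"
        by (rule crit[OF aV bV]) (use bp bq fin in auto)
      then have "butlast p = butlast q" using Suc.IH[of "butlast p" a "last (butlast p)" "butlast q"]
        bp bq Suc.prems(1) by simp
      moreover have "last p = last q" using p q by (simp add: shortest_path_def)
      ultimately show ?thesis using nep by (metis append_butlast_last_id)
    qed
  qed
  show ?thesis unfolding geodetic_def using main by blast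
qed

lemma geodetic_pred_unique:
  assumes geo: "geodetic V E" and xV: "x \<in> V" and yV: "y \<in> V"
    and e1: "{z1,y} \<in> E" and e2: "{z2,y} \<in> E"
    and d1: "dist V E x z1 + 1 = dist V E x y" and d2: "dist V E x z2 + 1 = dist V E x y"
    and fin: "dist V E x y \<noteq> \<infinity>"
  shows "z1 = z2"
proof -
  have f1: "dist V E x z1 \<noteq> \<infinity>"
  proof assume "dist V E x z1 = \<infinity>" then show False using d1 fin by simp qed
  have f2: "dist V E x z2 \<noteq> \<infinity>"
  proof assume "dist V E x z2 = \<infinity>" then show False using d2 fin by simp qed
  obtain p1 where p1: "shortest_path V E x z1 p1" using dist_attained[OF f1] by blast
  obtain p2 where p2: "shortest_path V E x z2 p2" using dist_attained[OF f2] by blast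
  have sp: "shortest_path V E x y (pi @ [y])" if pi: "shortest_path V E x zi pi"
    and ei: "{zi,y} \<in> E" and di: "dist V E x zi + 1 = dist V E x y" for pi zi
  proof -
    have ne: "pi \<noteq> []" using pi by (auto simp: shortest_path_def walk_def)
    have "walk V E (pi @ [y])" using walk_snoc[of V E pi y] pi ei yV
      by (simp add: shortest_path_def)
    moreover have "enat (length (pi @ [y]) - 1) = enat (length pi - 1) + 1"
      using ne by (simp add: one_enat_def)
    ultimately show ?thesis using pi di ne unfolding shortest_path_def by auto
  qed
  have "p1 @ [y] = p2 @ [y]" using geo xV yV sp[OF p1 e1 d1] sp[OF p2 e2 d2]
    unfolding geodetic_def by blast
  then have "p1 = p2" by simp
  then show ?thesis using p1 p2 by (simp add: shortest_path_def)
qed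

lemma pred_exists:
  assumes fin: "dist V E x y \<noteq> \<infinity>" and ne: "x \<noteq> y"
    and lipE: "\<And>u w. {u,w} \<in> E \<Longrightarrow> w \<in> V"
  shows "\<exists>p z. shortest_path V E x y p \<and> z \<in> set p \<and> {z,y} \<in> E \<and> dist V E x z + 1 = dist V E x y"
proof -
  obtain p where p: "shortest_path V E x y p" using dist_attained[OF fin] by blast
  have "\<not> length p \<le> 1" using shortest_len1[OF p] ne by auto
  then have len: "length p \<ge> 2" by simp
  note bp = shortest_butlast[OF p len]
  have "butlast p \<noteq> []" using len by (cases p) auto
  then have "last (butlast p) \<in> set (butlast p)" by (rule last_in_set)
  then have "last (butlast p) \<in> set p" by (rule in_set_butlastD)
  then show ?thesis using bp p by blast
qed

lemma switch_index:
  assumes "P (p ! 0)" "\<not> P (p ! (length p - 1))" "p \<noteq> []"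
  shows "\<exists>i. Suc i < length p \<and> P (p ! i) \<and> \<not> P (p ! Suc i)"
proof (rule ccontr)
  assume "\<not> ?thesis"
  then have step: "\<And>i. Suc i < length p \<Longrightarrow> P (p ! i) \<Longrightarrow> P (p ! Suc i)" by blast
  have "i < length p \<Longrightarrow> P (p ! i)" for i
  proof (induction i)
    case 0 then show ?case using assms(1) by simp
  next
    case (Suc i) then show ?case using step[of i] by simp
  qed
  then show False using assms by simp
qed


lemma dist_edge1: "{y,z} \<in> E \<Longrightarrow> y \<in> V \<Longrightarrow> z \<in> V \<Longrightarrow> dist V E y z \<le> 1"
proof -
  assume e: "{y,z} \<in> E" and yV: "y \<in> V" and zV: "z \<in> V"
  have "walk V E [y,z]" unfolding walk_def using e yV zV
    by (auto simp: less_Suc_eq nth_Cons split: nat.splits)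
  then have "dist V E y z \<le> enat (length [y,z] - 1)" by (rule dist_le_walk) auto
  then show ?thesis by (simp add: one_enat_def)
qed

lemma lemmaP_gen:
  assumes lipE: "\<And>a b. {a,b} \<in> E \<Longrightarrow> a \<in> V \<and> b \<in> V"
    and AB: "A \<union> B = V" "A \<inter> B = {}"
    and uA: "u \<in> A" and wA: "w \<in> A" and xB: "x \<in> B" and wx: "{w,x} \<in> E"
    and par: "\<And>y z. y \<in> A \<Longrightarrow> z \<in> B \<Longrightarrow> {y,z} \<in> E \<Longrightarrow> (y \<noteq> w \<or> z \<noteq> x) \<Longrightarrow>
                \<exists>n. dist V E y w + dist V E z x = enat n \<and> odd n"
  shows "dist V E u w \<le> dist V E u x"
proof (cases "dist V E u x = \<infinity>")
  case False
  then obtain p where p: "shortest_path V E u x p" using dist_attained[OF False] by blast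
  have w: "walk V E p" and h: "hd p = u" and l: "last p = x" and dl: "enat (length p - 1) = dist V E u x"
    using p by (auto simp: shortest_path_def)
  have ne: "p \<noteq> []" using w walk_ne by blast
  have p0: "p ! 0 \<in> A" using h ne uA by (simp add: hd_conv_nth)
  have pl: "p ! (length p - 1) \<notin> A" using l ne xB AB by (auto simp: last_conv_nth)
  obtain i where i: "Suc i < length p" "p ! i \<in> A" "p ! Suc i \<notin> A"
    using switch_index[of "\<lambda>v. v \<in> A", OF p0 pl ne] by blast
  define y where "y = p ! i"
  define z where "z = p ! Suc i"
  have yz: "{y,z} \<in> E" unfolding y_def z_def using walk_nth_edge[OF w i(1)] .
  have yA: "y \<in> A" using i y_def by simp
  have zB: "z \<in> B" using i z_def lipE[OF yz] AB by auto
  have d1: "dist V E u y \<le> enat i"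
  proof -
    have "walk V E (take (Suc i) p)" using walk_take[OF w] i by simp
    moreover have "hd (take (Suc i) p) = u" using h ne by simp
    moreover have "last (take (Suc i) p) = y" using i unfolding y_def
      by (simp add: take_Suc_conv_app_nth)
    ultimately show ?thesis using dist_le_walk i by fastforce
  qed
  have d2: "dist V E z x \<le> enat (length p - 1 - Suc i)"
  proof -
    have "walk V E (drop (Suc i) p)" using walk_drop[OF w] i by simp
    moreover have "hd (drop (Suc i) p) = z" using i unfolding z_def by (simp add: hd_drop_conv_nth)
    moreover have "last (drop (Suc i) p) = x" using i l by simp
    ultimately have "dist V E z x \<le> enat (length (drop (Suc i) p) - 1)" using dist_le_walk by metis
    then show ?thesis by simp
  qed
  obtain L where L: "dist V E u x = enat L" "L = length p - 1" using dl by simp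
  obtain a where a: "dist V E u y = enat a" "a \<le> i" using d1 by (cases "dist V E u y") auto
  obtain b where b: "dist V E z x = enat b" "b \<le> length p - 1 - Suc i" using d2
    by (cases "dist V E z x") auto
  have sum: "a + 1 + b \<le> L" using a b L i by simp
  show ?thesis
  proof (cases "y = w \<and> z = x")
    case True
    then show ?thesis using a L sum by simp
  next
    case False
    then obtain n where n: "dist V E y w + dist V E z x = enat n" "odd n"
      using par[OF yA zB yz] by blast
    then obtain c where c: "dist V E y w = enat c" by (cases "dist V E y w") auto
    have cn: "c + b = n" using n c b by simp
    have "dist V E y w \<le> dist V E y z + dist V E z w" by (rule dist_triangle)
    also have "\<dots> \<le> dist V E y z + (dist V E z x + dist V E x w)"
      by (simp add: add_left_mono dist_triangle)
    finally have "dist V E y w \<le> dist V E y z + (dist V E z x + dist V E x w)" .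
    moreover have "dist V E y z \<le> 1" using dist_edge1[OF yz] lipE[OF yz] by blast
    moreover have "dist V E x w \<le> 1" using dist_edge1[of x w E V] wx lipE[OF wx]
      by (simp add: insert_commute)
    ultimately have "dist V E y w \<le> 1 + (dist V E z x + 1)"
      by (meson add_mono order_trans order_refl)
    then have "c \<le> b + 2" using c b by (simp add: one_enat_def)
    then have "c \<le> b + 1" using cn n(2) by presburger
    have "dist V E u w \<le> dist V E u y + dist V E y w" by (rule dist_triangle)
    also have "\<dots> = enat (a + c)" using a c by simp
    also have "\<dots> \<le> enat L" using \<open>c \<le> b + 1\<close> sum by simp
    finally show ?thesis using L by simp
  qed
qed simp


lemma min_le_plus:
  fixes a b a' b' c :: enat
  assumes "a \<le> c + a'" "b \<le> c + b'"
  shows "min a b \<le> c + min a' b'"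
proof (cases "a' \<le> b'")
  case True
  then have "min a' b' = a'" by simp
  then show ?thesis using assms(1) by (simp add: min.coboundedI1)
next
  case False
  then have "min a' b' = b'" by simp
  then show ?thesis using assms(2) by (simp add: min.coboundedI2)
qed

locale subdiv =
  fixes V :: "'a set" and E :: "'a set set" and S T :: "'a set" and k :: nat
  assumes sg: "simple_graph V E" and geo: "geodetic V E"
    and ST: "S \<union> T = V" and disj: "S \<inter> T = {}"
    and clS: "geodetically_closed V E S" and clT: "geodetically_closed V E T"
    and par: "\<And>u v w x. u \<in> S \<Longrightarrow> w \<in> S \<Longrightarrow> v \<in> T \<Longrightarrow> x \<in> T \<Longrightarrow>
           {u, v} \<in> E \<Longrightarrow> {w, x} \<in> E \<Longrightarrow> {u, v} \<noteq> {w, x} \<Longrightarrow>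
           \<exists>n. dist V E u w + dist V E v x = enat n \<and> odd n"
begin

abbreviation "dG \<equiv> dist V E"
abbreviation "V' \<equiv> subdiv_V V E S T k"
abbreviation "E' \<equiv> subdiv_E E S T k"
abbreviation "CP \<equiv> cut_pairs E S T"

lemma edgeV: "{a,b} \<in> E \<Longrightarrow> a \<in> V \<and> b \<in> V \<and> a \<noteq> b"
  using sg unfolding simple_graph_def by (metis doubleton_eq_iff)

lemma lipE: "{a,b} \<in> E \<Longrightarrow> a \<in> V \<and> b \<in> V"
  using edgeV by blast

lemma CP_iff: "(u,v) \<in> CP \<longleftrightarrow> u \<in> S \<and> v \<in> T \<and> {u,v} \<in> E"
  by (simp add: cut_pairs_def)

lemma side: "x \<in> V \<Longrightarrow> x \<notin> S \<longleftrightarrow> x \<in> T"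
  using ST disj by auto

lemma ST_V: "x \<in> S \<Longrightarrow> x \<in> V" "x \<in> T \<Longrightarrow> x \<in> V"
  using ST by auto

lemma noncut_same: "{a,b} \<in> E \<Longrightarrow> {a,b} \<notin> cut_set E S T \<Longrightarrow> (a \<in> S \<longleftrightarrow> b \<in> S)"
proof -
  assume e: "{a,b} \<in> E" and nc: "{a,b} \<notin> cut_set E S T"
  have V: "a \<in> V" "b \<in> V" using lipE[OF e] by auto
  show ?thesis
  proof (rule ccontr)
    assume "\<not> (a \<in> S \<longleftrightarrow> b \<in> S)"
    then have "(a \<in> S \<and> b \<in> T) \<or> (b \<in> S \<and> a \<in> T)" using V side by blast
    then have "{a,b} \<in> cut_set E S T" using e unfolding cut_set_def by (auto simp: insert_commute)
    then show False using nc by simp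
  qed
qed

lemma cut_sides: "{a,b} \<in> cut_set E S T \<Longrightarrow> (a,b) \<in> CP \<or> (b,a) \<in> CP"
  unfolding cut_set_def cut_pairs_def by (auto simp: doubleton_eq_iff insert_commute)

lemma CP_cut: "(u,v) \<in> CP \<Longrightarrow> {u,v} \<in> cut_set E S T"
  unfolding cut_set_def cut_pairs_def by auto

lemma CP_V: "(u,v) \<in> CP \<Longrightarrow> u \<in> V \<and> v \<in> V \<and> u \<noteq> v"
  using CP_iff ST_V disj by blast

lemma lemmaP_S:
  assumes "y \<in> S" "(w,x) \<in> CP"
  shows "dG y w \<le> dG y x"
proof -
  have w: "w \<in> S" "x \<in> T" "{w,x} \<in> E" using assms CP_iff by auto
  show ?thesis
  proof (rule lemmaP_gen[of E V S T y w x])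
    show "\<And>a b. {a, b} \<in> E \<Longrightarrow> a \<in> V \<and> b \<in> V" using lipE by blast
    fix a b assume "a \<in> S" "b \<in> T" "{a,b} \<in> E" "a \<noteq> w \<or> b \<noteq> x"
    moreover then have "{a,b} \<noteq> {w,x}" using w disj by (auto simp: doubleton_eq_iff)
    ultimately show "\<exists>n. dG a w + dG b x = enat n \<and> odd n" using par w by blast
  qed (use ST disj assms w in auto)
qed

lemma lemmaP_T:
  assumes "y \<in> T" "(w,x) \<in> CP"
  shows "dG y x \<le> dG y w"
proof -
  have w: "w \<in> S" "x \<in> T" "{x,w} \<in> E" using assms CP_iff by (auto simp: insert_commute)
  show ?thesis
  proof (rule lemmaP_gen[of E V T S y x w])
    show "\<And>a b. {a, b} \<in> E \<Longrightarrow> a \<in> V \<and> b \<in> V" using lipE by blast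
    fix a b assume ab: "a \<in> T" "b \<in> S" "{a,b} \<in> E" "a \<noteq> x \<or> b \<noteq> w"
    then have "{b,a} \<noteq> {w,x}" using w disj by (auto simp: doubleton_eq_iff)
    moreover have "{b,a} \<in> E" using ab by (simp add: insert_commute)
    ultimately obtain n where "dG b w + dG a x = enat n \<and> odd n" using par[of b w a x] ab w
      by (auto simp: insert_commute)
    then show "\<exists>n. dG a x + dG b w = enat n \<and> odd n" by (auto simp: add.commute)
  qed (use ST disj assms w in auto)
qed

definition cst :: "'a \<Rightarrow> 'a \<Rightarrow> nat" where
  "cst x y = (if (x \<in> S) = (y \<in> S) then 0 else k)"

definition DD :: "'a \<Rightarrow> 'a \<Rightarrow> enat" where
  "DD x y = dG x y + enat (cst x y)"

definition Phi :: "'a + 'a \<times> 'a \<times> nat \<Rightarrow> 'a \<Rightarrow> enat" where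
  "Phi s y = (case s of Inl x \<Rightarrow> DD x y
      | Inr (u0, v0, i0) \<Rightarrow> min (enat i0 + DD u0 y) (enat (k + 1 - i0) + DD v0 y))"

definition srct :: "'a + 'a \<times> 'a \<times> nat \<Rightarrow> 'a \<Rightarrow> 'a \<Rightarrow> nat \<Rightarrow> enat" where
  "srct s u v i = (case s of Inl _ \<Rightarrow> \<infinity>
      | Inr (u0, v0, i0) \<Rightarrow> if u0 = u \<and> v0 = v then enat (i - i0 + (i0 - i)) else \<infinity>)"

definition CV :: "'a + 'a \<times> 'a \<times> nat \<Rightarrow> 'a \<Rightarrow> 'a \<Rightarrow> nat \<Rightarrow> enat" where
  "CV s u v i = min (min (enat i + Phi s u) (enat (k + 1 - i) + Phi s v)) (srct s u v i)"

definition FF :: "'a + 'a \<times> 'a \<times> nat \<Rightarrow> 'a + 'a \<times> 'a \<times> nat \<Rightarrow> enat" where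
  "FF s b = (case b of Inl y \<Rightarrow> Phi s y | Inr (u, v, i) \<Rightarrow> CV s u v i)"

lemma Phi_Inl[simp]: "Phi (Inl x) y = DD x y" by (simp add: Phi_def)
lemma Phi_Inr[simp]: "Phi (Inr (u0,v0,i0)) y = min (enat i0 + DD u0 y) (enat (k + 1 - i0) + DD v0 y)"
  by (simp add: Phi_def)
lemma FF_Inl[simp]: "FF s (Inl y) = Phi s y" by (simp add: FF_def)
lemma FF_Inr[simp]: "FF s (Inr (u,v,i)) = CV s u v i" by (simp add: FF_def)
lemma srct_Inl[simp]: "srct (Inl x) u v i = \<infinity>" by (simp add: srct_def)
lemma srct_same[simp]: "srct (Inr (u,v,i0)) u v i = enat (i - i0 + (i0 - i))" by (simp add: srct_def)
lemma srct_other: "(u0,v0) \<noteq> (u,v) \<Longrightarrow> srct (Inr (u0,v0,i0)) u v i = \<infinity>" by (simp add: srct_def)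

lemma V'_Inl[simp]: "Inl x \<in> V' \<longleftrightarrow> x \<in> V" by (auto simp: subdiv_V_def)
lemma V'_Inr[simp]: "Inr (u,v,i) \<in> V' \<longleftrightarrow> (u,v) \<in> CP \<and> 1 \<le> i \<and> i \<le> k" by (auto simp: subdiv_V_def)

lemma sub_node_V': "(u,v) \<in> CP \<Longrightarrow> i \<le> Suc k \<Longrightarrow> sub_node k u v i \<in> V'"
  using CP_V by (auto simp: sub_node_def)

lemma sub_node_E': "(u,v) \<in> CP \<Longrightarrow> i \<le> k \<Longrightarrow> {sub_node k u v i, sub_node k u v (Suc i)} \<in> E'"
  unfolding subdiv_E_def by blast

lemma Inl_E': "{a,b} \<in> E \<Longrightarrow> {a,b} \<notin> cut_set E S T \<Longrightarrow> {Inl a, Inl b} \<in> E'"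
  unfolding subdiv_E_def by blast

lemma DD_self: "x \<in> V \<Longrightarrow> DD x x = 0"
  by (simp add: DD_def cst_def dist_self zero_enat_def)

end

lemma enat_Suc_plus: "enat (Suc i) + P = 1 + (enat i + P)"
  by (cases P) (simp_all add: one_enat_def)

context subdiv begin

lemma DD_noncut_lip:
  assumes e: "{a,b} \<in> E" and nc: "{a,b} \<notin> cut_set E S T"
  shows "DD x b \<le> 1 + DD x a"
proof -
  have "cst x a = cst x b" using noncut_same[OF e nc] by (simp add: cst_def)
  moreover have "dG x b \<le> dG x a + 1" using dist_edge[OF e] lipE[OF e] by blast
  ultimately show ?thesis unfolding DD_def
    by (metis add.commute add.left_commute add_right_mono)
qed

lemma Phi_noncut_lip:
  assumes e: "{a,b} \<in> E" and nc: "{a,b} \<notin> cut_set E S T"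
  shows "Phi s b \<le> 1 + Phi s a"
proof (cases s)
  case (Inl x) then show ?thesis using DD_noncut_lip[OF e nc] by simp
next
  case (Inr r)
  then obtain u0 v0 i0 where r: "s = Inr (u0,v0,i0)" by (cases r) auto
  have "enat i0 + DD u0 b \<le> 1 + (enat i0 + DD u0 a)"
    using DD_noncut_lip[OF e nc, of u0] by (metis add.left_commute add_left_mono)
  moreover have "enat (k + 1 - i0) + DD v0 b \<le> 1 + (enat (k + 1 - i0) + DD v0 a)"
    using DD_noncut_lip[OF e nc, of v0] by (metis add.left_commute add_left_mono)
  ultimately show ?thesis unfolding r Phi_Inr by (rule min_le_plus)
qed

lemma cst_le: "cst x y \<le> k" by (simp add: cst_def)

lemma DD_cut:
  assumes uv: "(u,v) \<in> CP"
  shows "DD x u \<le> enat (k+1) + DD x v \<and> DD x v \<le> enat (k+1) + DD x u"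
proof -
  have e: "{u,v} \<in> E" "{v,u} \<in> E" using uv CP_iff by (auto simp: insert_commute)
  have V: "u \<in> V" "v \<in> V" using CP_V uv by auto
  have d1: "dG x u \<le> dG x v + 1" using dist_edge[OF e(2) V(1)] .
  have d2: "dG x v \<le> dG x u + 1" using dist_edge[OF e(1) V(2)] .
  have c: "enat (cst x u) \<le> enat k + enat (cst x v)" "enat (cst x v) \<le> enat k + enat (cst x u)"
    using cst_le[of x u] cst_le[of x v] by auto
  have "DD x u \<le> (dG x v + 1) + (enat k + enat (cst x v))"
    unfolding DD_def using d1 c(1) by (rule add_mono)
  also have "\<dots> = enat (k+1) + DD x v" unfolding DD_def by (simp add: one_enat_def ac_simps)
  finally have A: "DD x u \<le> enat (k+1) + DD x v" .
  have "DD x v \<le> (dG x u + 1) + (enat k + enat (cst x u))"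
    unfolding DD_def using d2 c(2) by (rule add_mono)
  also have "\<dots> = enat (k+1) + DD x u" unfolding DD_def by (simp add: one_enat_def ac_simps)
  finally show ?thesis using A by simp
qed

lemma Phi_cut:
  assumes uv: "(u,v) \<in> CP"
  shows "Phi s u \<le> enat (k+1) + Phi s v \<and> Phi s v \<le> enat (k+1) + Phi s u"
proof (cases s)
  case (Inl x) then show ?thesis using DD_cut[OF uv] by simp
next
  case (Inr r)
  then obtain u0 v0 i0 where r: "s = Inr (u0,v0,i0)" by (cases r) auto
  have A: "enat i0 + DD u0 u \<le> enat (k+1) + (enat i0 + DD u0 v)"
    "enat i0 + DD u0 v \<le> enat (k+1) + (enat i0 + DD u0 u)"
    using DD_cut[OF uv, of u0] by (metis add.left_commute add_left_mono)+
  have B: "enat (k + 1 - i0) + DD v0 u \<le> enat (k+1) + (enat (k + 1 - i0) + DD v0 v)"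
    "enat (k + 1 - i0) + DD v0 v \<le> enat (k+1) + (enat (k + 1 - i0) + DD v0 u)"
    using DD_cut[OF uv, of v0] by (metis add.left_commute add_left_mono)+
  show ?thesis unfolding r Phi_Inr using min_le_plus[OF A(1) B(1)] min_le_plus[OF A(2) B(2)] by simp
qed

lemma sub_node_0[simp]: "sub_node k u v 0 = Inl u" by (simp add: sub_node_def)
lemma sub_node_Suck[simp]: "sub_node k u v (Suc k) = Inl v" by (simp add: sub_node_def)
lemma sub_node_mid: "1 \<le> i \<Longrightarrow> i \<le> k \<Longrightarrow> sub_node k u v i = Inr (u,v,i)" by (simp add: sub_node_def)

lemma consistency:
  assumes s: "s \<in> V'" and uv: "(u,v) \<in> CP" and i: "i \<le> Suc k"
  shows "FF s (sub_node k u v i) = CV s u v i"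
proof -
  have pc: "Phi s u \<le> enat (k+1) + Phi s v" "Phi s v \<le> enat (k+1) + Phi s u"
    using Phi_cut[OF uv] by auto
  have uV: "u \<in> V" "v \<in> V" using CP_V uv by auto
  have st0: "Phi s u \<le> srct s u v 0" and stk: "Phi s v \<le> srct s u v (Suc k)"
  proof -
    have "Phi s u \<le> srct s u v 0 \<and> Phi s v \<le> srct s u v (Suc k)"
    proof (cases s)
      case (Inl x) then show ?thesis by simp
    next
      case (Inr r)
      then obtain u0 v0 i0 where r: "s = Inr (u0,v0,i0)" by (cases r) auto
      show ?thesis
      proof (cases "u0 = u \<and> v0 = v")
        case True
        have "i0 \<le> k" using s r by simp
        have e: "u0 = u" "v0 = v" using True by auto
        have "Phi s u \<le> enat i0 + DD u u" "Phi s v \<le> enat (k+1-i0) + DD v v"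
          unfolding r e Phi_Inr by (simp_all add: min.coboundedI1 min.coboundedI2)
        then show ?thesis using True r \<open>i0 \<le> k\<close> DD_self uV by simp
      next
        case False then show ?thesis using r srct_other[of u0 v0 u v] by auto
      qed
    qed
    then show "Phi s u \<le> srct s u v 0" "Phi s v \<le> srct s u v (Suc k)" by auto
  qed
  show ?thesis
  proof (cases "i = 0")
    case True
    then show ?thesis using pc st0 by (simp add: CV_def min_def zero_enat_def[symmetric])
  next
    case False
    show ?thesis
    proof (cases "i = Suc k")
      case True
      then show ?thesis using pc stk by (simp add: CV_def min_def zero_enat_def[symmetric])
    next
      case False
      then show ?thesis using \<open>i \<noteq> 0\<close> i by (simp add: sub_node_def)
    qed
  qed
qed

lemma srct_lip:
  shows "srct s u v (Suc i) \<le> 1 + srct s u v i \<and> srct s u v i \<le> 1 + srct s u v (Suc i)"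
proof (cases s)
  case (Inl x) then show ?thesis by simp
next
  case (Inr r)
  then obtain u0 v0 i0 where r: "s = Inr (u0,v0,i0)" by (cases r) auto
  show ?thesis
  proof (cases "u0 = u \<and> v0 = v")
    case True
    then show ?thesis unfolding r by (simp add: one_enat_def, arith)
  next
    case False then show ?thesis using r srct_other[of u0 v0 u v] by auto
  qed
qed

lemma CV_lip:
  assumes i: "i \<le> k"
  shows "CV s u v (Suc i) \<le> 1 + CV s u v i \<and> CV s u v i \<le> 1 + CV s u v (Suc i)"
proof -
  have a1: "enat (Suc i) + Phi s u \<le> 1 + (enat i + Phi s u)" by (simp add: enat_Suc_plus)
  have a2: "enat i + Phi s u \<le> 1 + (enat (Suc i) + Phi s u)" by (simp add: enat_Suc_plus)
  have e: "k + 1 - i = Suc (k + 1 - Suc i)" using i by simp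
  have b1: "enat (k + 1 - Suc i) + Phi s v \<le> 1 + (enat (k + 1 - i) + Phi s v)"
    unfolding e by (simp add: enat_Suc_plus)
  have b2: "enat (k + 1 - i) + Phi s v \<le> 1 + (enat (k + 1 - Suc i) + Phi s v)"
    unfolding e by (simp add: enat_Suc_plus)
  show ?thesis unfolding CV_def
    using min_le_plus[OF min_le_plus[OF a1 b1] conjunct1[OF srct_lip]]
      min_le_plus[OF min_le_plus[OF a2 b2] conjunct2[OF srct_lip]] by simp
qed

lemma FF_lip:
  assumes s: "s \<in> V'" and e: "{b,c} \<in> E'"
  shows "FF s c \<le> FF s b + 1"
proof -
  from e consider (A) a a' where "{b,c} = {Inl a, Inl a'}" "{a,a'} \<in> E" "{a,a'} \<notin> cut_set E S T"
    | (B) u v i where "{b,c} = {sub_node k u v i, sub_node k u v (Suc i)}" "(u,v) \<in> CP" "i \<le> k"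
    unfolding subdiv_E_def by blast
  then show ?thesis
  proof cases
    case A
    have "{a',a} \<in> E" "{a',a} \<notin> cut_set E S T" using A by (simp_all add: insert_commute)
    then have "Phi s a \<le> 1 + Phi s a'" "Phi s a' \<le> 1 + Phi s a"
      using Phi_noncut_lip A by blast+
    then show ?thesis using A(1) by (auto simp: doubleton_eq_iff add.commute)
  next
    case B
    have "FF s (sub_node k u v i) = CV s u v i" "FF s (sub_node k u v (Suc i)) = CV s u v (Suc i)"
      using consistency[OF s B(2)] B(3) by auto
    then show ?thesis using B(1) CV_lip[OF B(3), of s u v] by (auto simp: doubleton_eq_iff add.commute)
  qed
qed

end

lemma step_le: "(X::enat) \<le> enat n + P \<Longrightarrow> X + 1 \<le> enat (Suc n) + P"
  by (metis add.commute add_right_mono enat_Suc_plus)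

lemma le_Suc_enat: "(X::enat) \<le> enat n \<Longrightarrow> X + 1 \<le> enat (Suc n)"
  by (metis add_right_mono eSuc_enat eSuc_plus_1)

lemma min3_cases: "min (min a b) c = a \<or> min (min a b) c = b \<or> min (min a b) c = (c::'a::linorder)"
  by (simp add: min_def)

context subdiv begin

lemma CV_le1: "CV s u v i \<le> enat i + Phi s u" by (simp add: CV_def min.coboundedI1)
lemma CV_le2: "CV s u v i \<le> enat (k + 1 - i) + Phi s v" by (simp add: CV_def min.coboundedI1)
lemma CV_le3: "CV s u v i \<le> srct s u v i" by (simp add: CV_def)

lemma desc_Inr_node:
  assumes s: "s \<in> V'" and b: "Inr (w,x,j) \<in> V'" and ne: "Inr (w,x,j) \<noteq> s"
    and fin: "FF s (Inr (w,x,j)) \<noteq> \<infinity>"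
  shows "\<exists>c\<in>V'. {Inr (w,x,j), c} \<in> E' \<and> FF s c + 1 \<le> FF s (Inr (w,x,j))"
proof -
  have wx: "(w,x) \<in> CP" and j: "1 \<le> j" "j \<le> k" using b by auto
  have bsub: "sub_node k w x j = Inr (w,x,j)" using j by (simp add: sub_node_mid)
  obtain j' where j': "j = Suc j'" using j by (cases j) auto
  let ?A = "enat j + Phi s w" and ?B = "enat (k + 1 - j) + Phi s x" and ?C = "srct s w x j"
  have cv: "FF s (Inr (w,x,j)) = min (min ?A ?B) ?C" by (simp add: CV_def)
  define cm where "cm = sub_node k w x j'"
  define cp where "cp = sub_node k w x (Suc j)"
  have cmV: "cm \<in> V'" and cpV: "cp \<in> V'" unfolding cm_def cp_def
    using sub_node_V'[OF wx] j j' by auto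
  have cmE: "{Inr (w,x,j), cm} \<in> E'" unfolding cm_def
    using sub_node_E'[OF wx, of j'] j j' bsub by (simp add: insert_commute)
  have cpE: "{Inr (w,x,j), cp} \<in> E'" unfolding cp_def
    using sub_node_E'[OF wx, of j] j bsub by simp
  have FFcm: "FF s cm = CV s w x j'" unfolding cm_def using consistency[OF s wx] j j' by simp
  have FFcp: "FF s cp = CV s w x (Suc j)" unfolding cp_def using consistency[OF s wx] j by simp
  consider "min (min ?A ?B) ?C = ?A" | "min (min ?A ?B) ?C = ?B" | "min (min ?A ?B) ?C = ?C"
    using min3_cases[of ?A ?B ?C] by blast
  then show ?thesis
  proof cases
    case 1
    have "FF s cm + 1 \<le> ?A" unfolding FFcm j' by (rule step_le) (rule CV_le1)
    then show ?thesis using cmV cmE cv 1 by auto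
  next
    case 2
    have e: "k + 1 - j = Suc (k + 1 - Suc j)" using j by simp
    have "FF s cp + 1 \<le> ?B" unfolding FFcp e by (rule step_le) (rule CV_le2)
    then show ?thesis using cpV cpE cv 2 by auto
  next
    case 3
    then have Cfin: "?C \<noteq> \<infinity>" using fin cv by simp
    then obtain i0 where si: "s = Inr (w,x,i0)"
      by (cases s) (auto simp: srct_def split: sum.splits prod.splits if_splits)
    have "j \<noteq> i0" using ne si by auto
    show ?thesis
    proof (cases "i0 < j")
      case True
      have "FF s cm \<le> enat (j' - i0 + (i0 - j'))" unfolding FFcm using CV_le3[of s w x j'] si by simp
      then have h: "FF s cm + 1 \<le> enat (Suc (j' - i0 + (i0 - j')))" by (rule le_Suc_enat)
      have eq: "j - i0 + (i0 - j) = Suc (j' - i0 + (i0 - j'))" using True j' by simp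
      have "FF s cm + 1 \<le> enat (j - i0 + (i0 - j))" unfolding eq by (rule h)
      then show ?thesis using cmV cmE cv 3 si by auto
    next
      case False
      then have lt: "j < i0" using \<open>j \<noteq> i0\<close> by simp
      have "FF s cp \<le> enat (Suc j - i0 + (i0 - Suc j))" unfolding FFcp using CV_le3[of s w x "Suc j"] si by simp
      then have h: "FF s cp + 1 \<le> enat (Suc (Suc j - i0 + (i0 - Suc j)))" by (rule le_Suc_enat)
      have eq: "j - i0 + (i0 - j) = Suc (Suc j - i0 + (i0 - Suc j))" using lt by simp
      have "FF s cp + 1 \<le> enat (j - i0 + (i0 - j))" unfolding eq by (rule h)
      then show ?thesis using cpV cpE cv 3 si by auto
    qed
  qed
qed


lemma DD_fin: "DD x y \<noteq> \<infinity> \<Longrightarrow> dG x y \<noteq> \<infinity>"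
  by (cases "dG x y") (auto simp: DD_def)

lemma desc_Inl_Inl:
  assumes xV: "x \<in> V" and yV: "y \<in> V" and ne: "y \<noteq> x" and fin: "DD x y \<noteq> \<infinity>"
  shows "\<exists>c\<in>V'. {Inl y, c} \<in> E' \<and> FF (Inl x) c + 1 \<le> DD x y"
proof -
  have "dG x y \<noteq> \<infinity>" using fin DD_fin by blast
  then obtain p z where p: "shortest_path V E x y p" and zp: "z \<in> set p" and zy: "{z,y} \<in> E"
    and dz: "dG x z + 1 = dG x y"
    using pred_exists[of V E x y] ne lipE by metis
  have zV: "z \<in> V" using lipE[OF zy] by simp
  show ?thesis
  proof (cases "{z,y} \<in> cut_set E S T")
    case False
    have "{y,z} \<in> E" "{y,z} \<notin> cut_set E S T" using zy False by (simp_all add: insert_commute)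
    then have e: "{Inl y, Inl z} \<in> E'" by (rule Inl_E')
    have "cst x z = cst x y" using noncut_same[OF zy False] by (simp add: cst_def)
    then have "FF (Inl x) (Inl z) + 1 = (dG x z + 1) + enat (cst x y)"
      by (simp add: DD_def ac_simps)
    also have "\<dots> = DD x y" using dz by (simp add: DD_def)
    finally have "FF (Inl x) (Inl z) + 1 = DD x y" .
    then show ?thesis using e zV by force
  next
    case True
    have side_xz: "x \<in> S \<longleftrightarrow> z \<in> S"
    proof -
      have opp: "z \<in> S \<longleftrightarrow> y \<in> T" using cut_sides[OF True] CP_iff side zV yV by blast
      have "x \<in> S \<Longrightarrow> y \<in> S \<Longrightarrow> z \<in> S" using clS p zp unfolding geodetically_closed_def by blast
      moreover have "x \<in> T \<Longrightarrow> y \<in> T \<Longrightarrow> z \<in> T" using clT p zp unfolding geodetically_closed_def by blast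
      ultimately show ?thesis using opp side xV yV zV by blast
    qed
    from cut_sides[OF True] show ?thesis
    proof
      assume zy': "(z,y) \<in> CP"
      then have "z \<in> S" "y \<in> T" using CP_iff by auto
      then have cz: "cst x z = 0" "cst x y = k" using side_xz side yV by (auto simp: cst_def)
      define c where "c = sub_node k z y k"
      have cV: "c \<in> V'" unfolding c_def using sub_node_V'[OF zy'] by simp
      have ce: "{Inl y, c} \<in> E'" unfolding c_def using sub_node_E'[OF zy', of k]
        by (simp add: insert_commute)
      have "FF (Inl x) c = CV (Inl x) z y k" unfolding c_def using consistency[OF _ zy'] xV by simp
      also have "\<dots> \<le> enat k + DD x z" using CV_le1[of "Inl x" z y k] by simp
      finally have "FF (Inl x) c + 1 \<le> enat k + DD x z + 1" by (rule add_right_mono)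
      also have "\<dots> = DD x y" using cz dz unfolding DD_def by (simp add: ac_simps zero_enat_def[symmetric])
      finally show ?thesis using cV ce by blast
    next
      assume yz': "(y,z) \<in> CP"
      then have "y \<in> S" "z \<in> T" using CP_iff by auto
      then have cz: "cst x z = 0" "cst x y = k" using side_xz side yV zV by (auto simp: cst_def)
      define c where "c = sub_node k y z 1"
      have cV: "c \<in> V'" unfolding c_def using sub_node_V'[OF yz'] by simp
      have ce: "{Inl y, c} \<in> E'" unfolding c_def using sub_node_E'[OF yz', of 0] by simp
      have "FF (Inl x) c = CV (Inl x) y z 1" unfolding c_def using consistency[OF _ yz'] xV by simp
      also have "\<dots> \<le> enat k + DD x z" using CV_le2[of "Inl x" y z 1] by simp
      finally have "FF (Inl x) c + 1 \<le> enat k + DD x z + 1" by (rule add_right_mono)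
      also have "\<dots> = DD x y" using cz dz unfolding DD_def by (simp add: ac_simps zero_enat_def[symmetric])
      finally show ?thesis using cV ce by blast
    qed
  qed
qed

lemma FF_self: "s \<in> V' \<Longrightarrow> FF s s = 0"
proof (cases s)
  case (Inl x)
  assume "s \<in> V'" then show ?thesis using Inl DD_self by simp
next
  case (Inr r)
  assume "s \<in> V'"
  obtain u0 v0 i0 where r: "s = Inr (u0,v0,i0)" using Inr by (cases r) auto
  have "FF s s \<le> srct s u0 v0 i0" using CV_le3[of s u0 v0 i0] r by simp
  then have "FF s s \<le> 0" using r by (simp add: zero_enat_def)
  then show ?thesis by simp
qed

lemma desc_Inl_src:
  assumes xV: "x \<in> V" and b: "b \<in> V'" and ne: "b \<noteq> Inl x" and fin: "FF (Inl x) b \<noteq> \<infinity>"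
  shows "\<exists>c\<in>V'. {b, c} \<in> E' \<and> FF (Inl x) c + 1 \<le> FF (Inl x) b"
proof (cases b)
  case (Inl y)
  then show ?thesis using desc_Inl_Inl[OF xV, of y] b ne fin by auto
next
  case (Inr r)
  then obtain w x' j where r: "b = Inr (w,x',j)" by (cases r) auto
  show ?thesis using desc_Inr_node[of "Inl x" w x' j] xV b ne fin r by simp
qed

lemma FF_dist_Inl:
  assumes xV: "x \<in> V" and b: "b \<in> V'"
  shows "dist V' E' (Inl x) b = FF (Inl x) b"
proof (rule potential_dist)
  show "Inl x \<in> V'" using xV by simp
  show "FF (Inl x) (Inl x) = 0" using DD_self xV by simp
  show "\<And>b c. {b, c} \<in> E' \<Longrightarrow> FF (Inl x) c \<le> FF (Inl x) b + 1" using FF_lip xV by simp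
  show "\<And>b. b \<in> V' \<Longrightarrow> b \<noteq> Inl x \<Longrightarrow> FF (Inl x) b \<noteq> \<infinity> \<Longrightarrow>
        \<exists>c\<in>V'. {b, c} \<in> E' \<and> FF (Inl x) c + 1 \<le> FF (Inl x) b"
    using desc_Inl_src xV by blast
qed (rule b)

end

lemma shift_le: "(P::enat) \<le> a + D \<Longrightarrow> b + P \<le> a + (b + D)"
proof -
  assume "P \<le> a + D"
  then have "b + P \<le> b + (a + D)" by (rule add_left_mono)
  also have "\<dots> = a + (b + D)" by (simp add: ac_simps)
  finally show ?thesis .
qed

context subdiv begin

lemma Phi_Inr_le:
  "Phi (Inr (u0,v0,i0)) y \<le> enat i0 + DD u0 y"
  "Phi (Inr (u0,v0,i0)) y \<le> enat (k + 1 - i0) + DD v0 y"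
  by (simp_all add: min.coboundedI1 min.coboundedI2)

lemma pointwise:
  assumes s: "s = Inr (u0,v0,i0)"
  shows "FF s c \<le> enat i0 + FF (Inl u0) c \<and> FF s c \<le> enat (k + 1 - i0) + FF (Inl v0) c"
proof (cases c)
  case (Inl y) then show ?thesis using s Phi_Inr_le by simp
next
  case (Inr r)
  then obtain w x j where c: "c = Inr (w,x,j)" by (cases r) auto
  have m: "FF s c \<le> min (enat j + Phi s w) (enat (k + 1 - j) + Phi s x)"
    unfolding c FF_Inr CV_def by (rule min.cobounded1)
  have m1: "min (enat j + Phi s w) (enat (k + 1 - j) + Phi s x)
        \<le> enat i0 + min (enat j + DD u0 w) (enat (k + 1 - j) + DD u0 x)"
    by (rule min_le_plus; rule shift_le) (simp_all add: s Phi_Inr_le)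
  have m2: "min (enat j + Phi s w) (enat (k + 1 - j) + Phi s x)
        \<le> enat (k + 1 - i0) + min (enat j + DD v0 w) (enat (k + 1 - j) + DD v0 x)"
    by (rule min_le_plus; rule shift_le) (simp_all add: s Phi_Inr_le)
  have e1: "FF (Inl u0) c = min (enat j + DD u0 w) (enat (k + 1 - j) + DD u0 x)"
    and e2: "FF (Inl v0) c = min (enat j + DD v0 w) (enat (k + 1 - j) + DD v0 x)"
    using c by (simp_all add: CV_def)
  have "FF s c \<le> enat i0 + FF (Inl u0) c" unfolding e1 by (rule order_trans[OF m m1])
  moreover have "FF s c \<le> enat (k + 1 - i0) + FF (Inl v0) c" unfolding e2 by (rule order_trans[OF m m2])
  ultimately show ?thesis by blast
qed

lemma desc_Inr_src:
  assumes s: "s = Inr (u0,v0,i0)" and sV: "s \<in> V'" and yV: "y \<in> V"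
    and fin: "FF s (Inl y) \<noteq> \<infinity>"
  shows "\<exists>c\<in>V'. {Inl y, c} \<in> E' \<and> FF s c + 1 \<le> FF s (Inl y)"
proof -
  have uv: "(u0,v0) \<in> CP" and i0: "1 \<le> i0" "i0 \<le> k" using sV s by auto
  have uV: "u0 \<in> V" "v0 \<in> V" using CP_V uv by auto
  let ?A = "enat i0 + DD u0 y" and ?B = "enat (k + 1 - i0) + DD v0 y"
  have Fy: "FF s (Inl y) = min ?A ?B" using s by simp
  show ?thesis
  proof (cases "?A \<le> ?B")
    case True
    then have Fy': "FF s (Inl y) = ?A" using Fy by simp
    show ?thesis
    proof (cases "y = u0")
      case True
      define c where "c = sub_node k u0 v0 1"
      have cV: "c \<in> V'" unfolding c_def using sub_node_V'[OF uv] by simp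
      have ce: "{Inl y, c} \<in> E'" unfolding c_def True using sub_node_E'[OF uv, of 0] by simp
      have "FF s c = CV s u0 v0 1" unfolding c_def using consistency[OF sV uv] by simp
      also have "\<dots> \<le> enat (i0 - 1)" using CV_le3[of s u0 v0 1] s i0 by simp
      finally have "FF s c + 1 \<le> enat (Suc (i0 - 1))" by (rule le_Suc_enat)
      also have "\<dots> = ?A" using True i0 DD_self uV by simp
      finally show ?thesis using cV ce Fy' by auto
    next
      case False
      have "DD u0 y \<noteq> \<infinity>" using fin Fy' by (cases "DD u0 y") auto
      then obtain c where c: "c \<in> V'" "{Inl y, c} \<in> E'" "FF (Inl u0) c + 1 \<le> DD u0 y"
        using desc_Inl_Inl[OF uV(1) yV False] by blast
      have "FF s c + 1 \<le> enat i0 + FF (Inl u0) c + 1"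
        using pointwise[OF s, of c] by (simp add: add_right_mono)
      also have "\<dots> \<le> ?A" using c(3) by (metis add.assoc add_left_mono)
      finally show ?thesis using c Fy' by auto
    qed
  next
    case False
    then have Fy': "FF s (Inl y) = ?B" using Fy by simp
    show ?thesis
    proof (cases "y = v0")
      case True
      define c where "c = sub_node k u0 v0 k"
      have cV: "c \<in> V'" unfolding c_def using sub_node_V'[OF uv] by simp
      have ce: "{Inl y, c} \<in> E'" unfolding c_def True using sub_node_E'[OF uv, of k]
        by (simp add: insert_commute)
      have "FF s c = CV s u0 v0 k" unfolding c_def using consistency[OF sV uv] by simp
      also have "\<dots> \<le> enat (k - i0)" using CV_le3[of s u0 v0 k] s i0 by simp
      finally have "FF s c + 1 \<le> enat (Suc (k - i0))" by (rule le_Suc_enat)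
      also have "\<dots> = ?B" using True i0 DD_self uV by (simp add: Suc_diff_le)
      finally show ?thesis using cV ce Fy' by auto
    next
      case False
      have "DD v0 y \<noteq> \<infinity>" using fin Fy' by (cases "DD v0 y") auto
      then obtain c where c: "c \<in> V'" "{Inl y, c} \<in> E'" "FF (Inl v0) c + 1 \<le> DD v0 y"
        using desc_Inl_Inl[OF uV(2) yV False] by blast
      have "FF s c + 1 \<le> enat (k + 1 - i0) + FF (Inl v0) c + 1"
        using pointwise[OF s, of c] by (simp add: add_right_mono)
      also have "\<dots> \<le> ?B" using c(3) by (metis add.assoc add_left_mono)
      finally show ?thesis using c Fy' by auto
    qed
  qed
qed

lemma FF_dist:
  assumes sV: "s \<in> V'" and b: "b \<in> V'"
  shows "dist V' E' s b = FF s b"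
proof (cases s)
  case (Inl x)
  then show ?thesis using FF_dist_Inl sV b by simp
next
  case (Inr r)
  then obtain u0 v0 i0 where s: "s = Inr (u0,v0,i0)" by (cases r) auto
  show ?thesis
  proof (rule potential_dist[OF sV])
    show "FF s s = 0" using FF_self sV by simp
    show "\<And>b c. {b, c} \<in> E' \<Longrightarrow> FF s c \<le> FF s b + 1" using FF_lip sV by simp
    show "\<And>b. b \<in> V' \<Longrightarrow> b \<noteq> s \<Longrightarrow> FF s b \<noteq> \<infinity> \<Longrightarrow> \<exists>c\<in>V'. {b, c} \<in> E' \<and> FF s c + 1 \<le> FF s b"
    proof -
      fix b assume b: "b \<in> V'" "b \<noteq> s" "FF s b \<noteq> \<infinity>"
      show "\<exists>c\<in>V'. {b, c} \<in> E' \<and> FF s c + 1 \<le> FF s b"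
      proof (cases b)
        case (Inl y) then show ?thesis using desc_Inr_src[OF s sV, of y] b by simp
      next
        case (Inr r')
        then obtain w x j where r': "b = Inr (w,x,j)" by (cases r') auto
        show ?thesis using desc_Inr_node[OF sV, of w x j] b r' by simp
      qed
    qed
  qed (rule b)
qed

end

lemma one_le_enat: "(a::enat) \<noteq> 0 \<Longrightarrow> 1 \<le> a"
  by (cases a) (auto simp: one_enat_def zero_enat_def)

context subdiv begin

lemma cst_SS: "x \<in> S \<Longrightarrow> y \<in> S \<Longrightarrow> cst x y = 0" by (simp add: cst_def)
lemma cst_TT: "x \<in> T \<Longrightarrow> y \<in> T \<Longrightarrow> cst x y = 0" using disj by (auto simp: cst_def)
lemma cst_ST: "x \<in> S \<Longrightarrow> y \<in> T \<Longrightarrow> cst x y = k" using disj by (auto simp: cst_def)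
lemma cst_TS: "x \<in> T \<Longrightarrow> y \<in> S \<Longrightarrow> cst x y = k" using disj by (auto simp: cst_def)

lemma PhiS:
  assumes s: "s = Inr (u0,v0,i0)" and sV: "s \<in> V'"
  shows "y \<in> S \<Longrightarrow> Phi s y = enat i0 + dG u0 y"
    and "y \<in> T \<Longrightarrow> Phi s y = enat (k + 1 - i0) + dG v0 y"
proof -
  have uv: "(u0,v0) \<in> CP" and i0: "1 \<le> i0" "i0 \<le> k" using sV s by auto
  have u0S: "u0 \<in> S" and v0T: "v0 \<in> T" using uv CP_iff by auto
  {
    assume yS: "y \<in> S"
    have P: "dG u0 y \<le> dG v0 y" using lemmaP_S[OF yS uv] dist_commute by metis
    have DDu: "DD u0 y = dG u0 y" using cst_SS[OF u0S yS] by (simp add: DD_def zero_enat_def[symmetric])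
    have DDv: "DD v0 y = dG v0 y + enat k" using cst_TS[OF v0T yS] by (simp add: DD_def)
    have "enat i0 + dG u0 y \<le> enat (k + 1 - i0 + k) + dG v0 y"
      using i0 P by (intro add_mono) auto
    also have "\<dots> = enat (k + 1 - i0) + DD v0 y" unfolding DDv by (simp add: ac_simps)
    finally show "Phi s y = enat i0 + dG u0 y" using s DDu by (simp add: min_def)
  }
  {
    assume yT: "y \<in> T"
    have P: "dG v0 y \<le> dG u0 y" using lemmaP_T[OF yT uv] dist_commute by metis
    have DDv: "DD v0 y = dG v0 y" using cst_TT[OF v0T yT] by (simp add: DD_def zero_enat_def[symmetric])
    have DDu: "DD u0 y = dG u0 y + enat k" using cst_ST[OF u0S yT] by (simp add: DD_def)
    have "enat (k + 1 - i0) + dG v0 y \<le> enat (i0 + k) + dG u0 y"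
      using i0 P by (intro add_mono) auto
    also have "\<dots> = enat i0 + DD u0 y" unfolding DDu by (simp add: ac_simps)
    finally have "enat (k + 1 - i0) + DD v0 y \<le> enat i0 + DD u0 y" using DDv by simp
    then show "Phi s y = enat (k + 1 - i0) + dG v0 y" using s DDv by (simp add: min_def)
  }
qed

lemma CV_own:
  assumes s: "s = Inr (w,x,i0)" and sV: "s \<in> V'" and i: "i \<le> Suc k"
  shows "CV s w x i = enat (i - i0 + (i0 - i))"
proof -
  have wx: "(w,x) \<in> CP" and i0: "1 \<le> i0" "i0 \<le> k" using sV s by auto
  have V: "w \<in> V" "x \<in> V" "w \<noteq> x" using CP_V wx by auto
  have wS: "w \<in> S" and xT: "x \<in> T" using wx CP_iff by auto
  have d1: "1 \<le> dG x w" "1 \<le> dG w x"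
    using one_le_enat dist_zero V(3) by metis+
  have Dxw: "enat (k+1) \<le> DD x w" unfolding DD_def cst_TS[OF xT wS]
    using d1(1) by (metis add.commute add_right_mono one_enat_def plus_enat_simps(1) Suc_eq_plus1)
  have Dwx: "enat (k+1) \<le> DD w x" unfolding DD_def cst_ST[OF wS xT]
    using d1(2) by (metis add.commute add_right_mono one_enat_def plus_enat_simps(1) Suc_eq_plus1)
  have Pw: "enat i0 \<le> Phi s w"
  proof -
    have "enat i0 \<le> enat i0 + DD w w" by simp
    moreover have "enat i0 \<le> enat (k + 1 - i0) + DD x w"
    proof -
      have "enat i0 \<le> enat (k + 1 - i0) + enat (k+1)" using i0 by simp
      also have "\<dots> \<le> enat (k + 1 - i0) + DD x w" using Dxw by (rule add_left_mono)
      finally show ?thesis .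
    qed
    ultimately show ?thesis using s by simp
  qed
  have Px: "enat (k + 1 - i0) \<le> Phi s x"
  proof -
    have "enat (k + 1 - i0) \<le> enat i0 + enat (k+1)" by simp
    also have "\<dots> \<le> enat i0 + DD w x" using Dwx by (rule add_left_mono)
    finally have "enat (k + 1 - i0) \<le> enat i0 + DD w x" .
    moreover have "enat (k + 1 - i0) \<le> enat (k + 1 - i0) + DD x x" by simp
    ultimately show ?thesis using s by simp
  qed
  have a: "enat (i - i0 + (i0 - i)) \<le> enat i + Phi s w"
  proof -
    have "enat (i - i0 + (i0 - i)) \<le> enat i + enat i0" by simp
    also have "\<dots> \<le> enat i + Phi s w" using Pw by (rule add_left_mono)
    finally show ?thesis .
  qed
  have b: "enat (i - i0 + (i0 - i)) \<le> enat (k + 1 - i) + Phi s x"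
  proof -
    have "enat (i - i0 + (i0 - i)) \<le> enat (k + 1 - i) + enat (k + 1 - i0)" using i i0 by simp
    also have "\<dots> \<le> enat (k + 1 - i) + Phi s x" using Px by (rule add_left_mono)
    finally show ?thesis .
  qed
  show ?thesis unfolding CV_def using a b s by (simp add: min_def)
qed

lemma sub_node_eq_Inr: "sub_node k u v i = Inr (w,x,j) \<longleftrightarrow> i \<noteq> 0 \<and> i \<noteq> Suc k \<and> u = w \<and> v = x \<and> i = j"
  by (auto simp: sub_node_def)

lemma sub_node_eq_Inl: "sub_node k u v i = Inl y \<longleftrightarrow> (i = 0 \<and> y = u) \<or> (i \<noteq> 0 \<and> i = Suc k \<and> y = v)"
  by (auto simp: sub_node_def)

lemma nbrInr:
  assumes e: "{c, Inr (w,x,j)} \<in> E'"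
  shows "c = sub_node k w x (j - 1) \<or> c = sub_node k w x (Suc j)"
proof -
  from e consider (A) a a' where "{c, Inr (w,x,j)} = {Inl a, Inl a'}"
    | (B) u v i where "{c, Inr (w,x,j)} = {sub_node k u v i, sub_node k u v (Suc i)}"
    unfolding subdiv_E_def by blast
  then show ?thesis
  proof cases
    case A then show ?thesis by (auto simp: doubleton_eq_iff)
  next
    case B
    then have "(c = sub_node k u v i \<and> Inr (w,x,j) = sub_node k u v (Suc i)) \<or>
               (c = sub_node k u v (Suc i) \<and> Inr (w,x,j) = sub_node k u v i)"
      by (auto simp: doubleton_eq_iff)
    then show ?thesis
    proof
      assume h: "c = sub_node k u v i \<and> Inr (w,x,j) = sub_node k u v (Suc i)"
      then have "u = w" "v = x" "Suc i = j" using sub_node_eq_Inr[of u v "Suc i" w x j] by metis+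
      then show ?thesis using h by auto
    next
      assume h: "c = sub_node k u v (Suc i) \<and> Inr (w,x,j) = sub_node k u v i"
      then have "u = w" "v = x" "i = j" using sub_node_eq_Inr[of u v i w x j] by metis+
      then show ?thesis using h by auto
    qed
  qed
qed

lemma nbrInl:
  assumes e: "{c, Inl y} \<in> E'"
  shows "(\<exists>z. c = Inl z \<and> {y,z} \<in> E \<and> {y,z} \<notin> cut_set E S T) \<or>
         (\<exists>v. (y,v) \<in> CP \<and> c = sub_node k y v 1) \<or> (\<exists>u. (u,y) \<in> CP \<and> c = sub_node k u y k)"
proof -
  from e consider (A) a a' where "{c, Inl y} = {Inl a, Inl a'}" "{a,a'} \<in> E" "{a,a'} \<notin> cut_set E S T"
    | (B) u v i where "{c, Inl y} = {sub_node k u v i, sub_node k u v (Suc i)}" "(u,v) \<in> CP" "i \<le> k"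
    unfolding subdiv_E_def by blast
  then show ?thesis
  proof cases
    case A then show ?thesis by (auto simp: doubleton_eq_iff insert_commute)
  next
    case B
    then have "(c = sub_node k u v i \<and> Inl y = sub_node k u v (Suc i)) \<or>
               (c = sub_node k u v (Suc i) \<and> Inl y = sub_node k u v i)"
      by (auto simp: doubleton_eq_iff)
    then show ?thesis
    proof
      assume h: "c = sub_node k u v i \<and> Inl y = sub_node k u v (Suc i)"
      then have "i = k" "y = v" using sub_node_eq_Inl[of u v "Suc i" y] by auto
      then show ?thesis using h B(2) by auto
    next
      assume h: "c = sub_node k u v (Suc i) \<and> Inl y = sub_node k u v i"
      then have "i = 0" "y = u" using sub_node_eq_Inl[of u v i y] B(3) by auto
      then show ?thesis using h B(2) by auto
    qed
  qed
qed


lemma NoTie: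
  assumes sV: "s \<in> V'" and wx: "(w,x) \<in> CP" and ns: "\<And>i0. s \<noteq> Inr (w,x,i0)"
    and j: "1 \<le> j" "j \<le> k"
    and eq: "enat j + Phi s w = enat (k + 1 - j) + Phi s x" and fin: "Phi s w \<noteq> \<infinity>"
  shows False
proof -
  have wS: "w \<in> S" and xT: "x \<in> T" and wxE: "{w,x} \<in> E" using wx CP_iff by auto
  have xfin: "Phi s x \<noteq> \<infinity>" using eq fin by (cases "Phi s x"; cases "Phi s w") auto
  show False
  proof (cases s)
    case (Inl y)
    have yV: "y \<in> V" using sV Inl by simp
    obtain a where a: "dG y w = enat a" using fin Inl by (cases "dG y w") (auto simp: DD_def)
    obtain b where b: "dG y x = enat b" using xfin Inl by (cases "dG y x") (auto simp: DD_def)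
    show False
    proof (cases "y \<in> S")
      case True
      have "dG y w \<le> dG y x" by (rule lemmaP_S[OF True wx])
      then have ab: "a \<le> b" using a b by simp
      have "j + a = (k + 1 - j) + (b + k)" using eq Inl a b cst_SS[OF True wS] cst_ST[OF True xT]
        by (simp add: DD_def)
      then show False using ab j by simp
    next
      case False
      then have yT: "y \<in> T" using side yV by blast
      have "dG y x \<le> dG y w" by (rule lemmaP_T[OF yT wx])
      then have ab: "b \<le> a" using a b by simp
      have "j + (a + k) = (k + 1 - j) + b" using eq Inl a b cst_TS[OF yT wS] cst_TT[OF yT xT]
        by (simp add: DD_def)
      then show False using ab j by simp
    qed
  next
    case (Inr r)
    then obtain u0 v0 i0 where s: "s = Inr (u0,v0,i0)" by (cases r) auto
    have uv: "(u0,v0) \<in> CP" and i0: "1 \<le> i0" "i0 \<le> k" using sV s by auto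
    have u0S: "u0 \<in> S" and v0T: "v0 \<in> T" and uvE: "{u0,v0} \<in> E" using uv CP_iff by auto
    have neq: "(u0,v0) \<noteq> (w,x)" using ns s by auto
    have "{u0,v0} \<noteq> {w,x}" using neq u0S v0T wS xT disj by (auto simp: doubleton_eq_iff)
    then obtain n where n: "dG u0 w + dG v0 x = enat n" "odd n"
      using par[OF u0S wS v0T xT uvE wxE] by blast
    have Pw: "Phi s w = enat i0 + dG u0 w" using PhiS(1)[OF s sV wS] .
    have Px: "Phi s x = enat (k + 1 - i0) + dG v0 x" using PhiS(2)[OF s sV xT] .
    obtain a where a: "dG u0 w = enat a" using fin Pw by (cases "dG u0 w") auto
    obtain b where b: "dG v0 x = enat b" using xfin Px by (cases "dG v0 x") auto
    have "j + (i0 + a) = (k + 1 - j) + ((k + 1 - i0) + b)" using eq Pw Px a b by simp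
    moreover have "a + b = n" using n a b by simp
    ultimately show False using n(2) j i0 by presburger
  qed
qed

lemma U_Inr_pair:
  assumes sV: "s \<in> V'" and bV: "Inr (w,x,j) \<in> V'"
    and d1: "FF s (sub_node k w x (j - 1)) + 1 = FF s (Inr (w,x,j))"
    and d2: "FF s (sub_node k w x (Suc j)) + 1 = FF s (Inr (w,x,j))"
    and fin: "FF s (Inr (w,x,j)) \<noteq> \<infinity>"
  shows False
proof -
  have wx: "(w,x) \<in> CP" and j: "1 \<le> j" "j \<le> k" using bV by auto
  have c1: "FF s (sub_node k w x (j - 1)) = CV s w x (j - 1)" using consistency[OF sV wx] j by simp
  have c2: "FF s (sub_node k w x (Suc j)) = CV s w x (Suc j)" using consistency[OF sV wx] j by simp
  show False
  proof (cases "\<exists>i0. s = Inr (w,x,i0)")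
    case True
    then obtain i0 where s: "s = Inr (w,x,i0)" by blast
    have "CV s w x (j - 1) = enat (j - 1 - i0 + (i0 - (j - 1)))" using CV_own[OF s sV] j by simp
    moreover have "CV s w x (Suc j) = enat (Suc j - i0 + (i0 - Suc j))" using CV_own[OF s sV] j by simp
    moreover have "CV s w x j = enat (j - i0 + (i0 - j))" using CV_own[OF s sV] j by simp
    ultimately have "j - 1 - i0 + (i0 - (j - 1)) + 1 = j - i0 + (i0 - j)"
      "Suc j - i0 + (i0 - Suc j) + 1 = j - i0 + (i0 - j)"
      using d1 d2 c1 c2 by (simp_all add: one_enat_def)
    then show False using j by arith
  next
    case False
    then have ns: "\<And>i0. s \<noteq> Inr (w,x,i0)" by blast
    have st: "\<And>i. srct s w x i = \<infinity>"
      using ns by (cases s) (auto simp: srct_def split: prod.splits)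
    have cv: "\<And>i. CV s w x i = min (enat i + Phi s w) (enat (k + 1 - i) + Phi s x)"
      using st by (simp add: CV_def)
    show False
    proof (cases "Phi s w")
      case (enat a)
      show False
      proof (cases "Phi s x")
        case (enat b)
        have "min (j - 1 + a) (k + 1 - (j - 1) + b) + 1 = min (j + a) (k + 1 - j + b)"
             "min (Suc j + a) (k + 1 - Suc j + b) + 1 = min (j + a) (k + 1 - j + b)"
          using d1 d2 c1 c2 cv \<open>Phi s w = enat a\<close> enat by (simp_all add: one_enat_def)
        then have "j + a = k + 1 - j + b" using j by (simp add: min_def split: if_splits)
        then have "enat j + Phi s w = enat (k + 1 - j) + Phi s x" using \<open>Phi s w = enat a\<close> enat by simp
        then show False using NoTie[OF sV wx ns j] \<open>Phi s w = enat a\<close> by simp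
      next
        case infinity
        have "Suc j + a + 1 = j + a" using d2 c2 cv \<open>Phi s w = enat a\<close> infinity by (simp add: one_enat_def)
        then show False by simp
      qed
    next
      case infinity
      show False
      proof (cases "Phi s x")
        case (enat b)
        have "k + 1 - (j - 1) + b + 1 = k + 1 - j + b" using d1 c1 cv infinity enat j by (simp add: one_enat_def)
        then show False using j by simp
      next
        case inf2: infinity
        show False using fin cv infinity inf2 by simp
      qed
    qed
  qed
qed

lemma U_Inr:
  assumes sV: "s \<in> V'" and bV: "Inr (w,x,j) \<in> V'"
    and e1: "{c1, Inr (w,x,j)} \<in> E'" and e2: "{c2, Inr (w,x,j)} \<in> E'"
    and d1: "FF s c1 + 1 = FF s (Inr (w,x,j))" and d2: "FF s c2 + 1 = FF s (Inr (w,x,j))"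
    and fin: "FF s (Inr (w,x,j)) \<noteq> \<infinity>"
  shows "c1 = c2"
proof (rule ccontr)
  assume ne: "c1 \<noteq> c2"
  from nbrInr[OF e1] nbrInr[OF e2] ne
  have "(c1 = sub_node k w x (j - 1) \<and> c2 = sub_node k w x (Suc j)) \<or>
        (c2 = sub_node k w x (j - 1) \<and> c1 = sub_node k w x (Suc j))" by blast
  then show False using U_Inr_pair[OF sV bV _ _ fin] d1 d2 by blast
qed

end

context subdiv begin

definition nb :: "'a \<Rightarrow> 'a \<Rightarrow> 'a + 'a \<times> 'a \<times> nat" where
  "nb y g = (if {y,g} \<in> cut_set E S T then (if y \<in> S then sub_node k y g 1 else sub_node k g y k) else Inl g)"

lemma CV_Inl: "CV (Inl x) u v i = min (enat i + DD x u) (enat (k + 1 - i) + DD x v)"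
  by (simp add: CV_def)

lemma descG:
  assumes xV: "x \<in> V" and yV: "y \<in> V" and e: "{c, Inl y} \<in> E'"
    and d: "FF (Inl x) c + 1 = DD x y" and fin: "DD x y \<noteq> \<infinity>"
  shows "\<exists>g. {g,y} \<in> E \<and> c = nb y g \<and> dG x g + 1 = dG x y"
proof -
  obtain dy where dy: "dG x y = enat dy" using fin by (cases "dG x y") (auto simp: DD_def)
  have xs: "x \<in> S \<or> x \<in> T" using xV ST by auto
  from nbrInl[OF e] show ?thesis
  proof (elim disjE exE conjE)
    fix z assume c: "c = Inl z" and yz: "{y,z} \<in> E" and nc: "{y,z} \<notin> cut_set E S T"
    have cs: "cst x z = cst x y" using noncut_same[OF yz nc] by (simp add: cst_def)
    have "DD x z \<noteq> \<infinity>" using d c fin by (cases "DD x z") auto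
    then obtain dz where dz: "dG x z = enat dz" by (cases "dG x z") (auto simp: DD_def)
    have "dz + cst x y + 1 = dy + cst x y" using d c dz dy cs by (simp add: DD_def one_enat_def)
    then have "dG x z + 1 = dG x y" using dz dy by (simp add: one_enat_def)
    moreover have "c = nb y z" using c nc by (simp add: nb_def)
    ultimately show ?thesis using yz by (metis insert_commute)
  next
    fix v assume yv: "(y,v) \<in> CP" and c: "c = sub_node k y v 1"
    have yS: "y \<in> S" and vT: "v \<in> T" and yvE: "{y,v} \<in> E" using yv CP_iff by auto
    have Fc: "FF (Inl x) c = min (1 + DD x y) (enat k + DD x v)"
      using consistency[OF _ yv, of "Inl x" 1] xV c CV_Inl by (simp add: one_enat_def)
    have le: "dG x y \<le> dG x v + 1" using dist_edge[of v y E V x] yvE yV by (simp add: insert_commute)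
    have "DD x v \<noteq> \<infinity>"
    proof
      assume "DD x v = \<infinity>"
      then have "1 + DD x y + 1 = DD x y" using d Fc by simp
      then show False using fin by (cases "DD x y") (auto simp: one_enat_def)
    qed
    then obtain dv where dv: "dG x v = enat dv" by (cases "dG x v") (auto simp: DD_def)
    have "dv + 1 = dy"
    proof (cases "x \<in> S")
      case True
      have "min (1 + dy) (k + (dv + k)) + 1 = dy"
        using d Fc dy dv cst_SS[OF True yS] cst_ST[OF True vT] by (simp add: DD_def one_enat_def)
      moreover have "dy \<le> dv + 1" using le dy dv by (simp add: one_enat_def)
      ultimately show ?thesis by (simp add: min_def split: if_splits)
    next
      case False
      then have xT: "x \<in> T" using xs by blast
      have "min (1 + (dy + k)) (k + dv) + 1 = dy + k"
        using d Fc dy dv cst_TS[OF xT yS] cst_TT[OF xT vT] by (simp add: DD_def one_enat_def)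
      then show ?thesis by (simp add: min_def split: if_splits)
    qed
    then have "dG x v + 1 = dG x y" using dv dy by (simp add: one_enat_def)
    moreover have "c = nb y v" using c CP_cut[OF yv] yS by (simp add: nb_def)
    ultimately show ?thesis using yvE by (metis insert_commute)
  next
    fix u assume uy: "(u,y) \<in> CP" and c: "c = sub_node k u y k"
    have uS: "u \<in> S" and yT: "y \<in> T" and uyE: "{u,y} \<in> E" using uy CP_iff by auto
    have Fc: "FF (Inl x) c = min (enat k + DD x u) (1 + DD x y)"
      using consistency[OF _ uy, of "Inl x" k] xV c CV_Inl by (simp add: one_enat_def)
    have le: "dG x y \<le> dG x u + 1" using dist_edge[of u y E V x] uyE yV by simp
    have "DD x u \<noteq> \<infinity>"
    proof
      assume "DD x u = \<infinity>"
      then have "1 + DD x y + 1 = DD x y" using d Fc by simp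
      then show False using fin by (cases "DD x y") (auto simp: one_enat_def)
    qed
    then obtain du where du: "dG x u = enat du" by (cases "dG x u") (auto simp: DD_def)
    have "du + 1 = dy"
    proof (cases "x \<in> S")
      case True
      have "min (k + du) (1 + (dy + k)) + 1 = dy + k"
        using d Fc dy du cst_SS[OF True uS] cst_ST[OF True yT] by (simp add: DD_def one_enat_def)
      then show ?thesis by (simp add: min_def split: if_splits)
    next
      case False
      then have xT: "x \<in> T" using xs by blast
      have "min (k + (du + k)) (1 + dy) + 1 = dy"
        using d Fc dy du cst_TS[OF xT uS] cst_TT[OF xT yT] by (simp add: DD_def one_enat_def)
      moreover have "dy \<le> du + 1" using le dy du by (simp add: one_enat_def)
      ultimately show ?thesis by (simp add: min_def split: if_splits)
    qed
    then have "dG x u + 1 = dG x y" using du dy by (simp add: one_enat_def)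
    moreover have "c = nb y u" using c CP_cut[OF uy] yT disj by (auto simp: nb_def insert_commute)
    ultimately show ?thesis using uyE by blast
  qed
qed

lemma U_Inl_src:
  assumes xV: "x \<in> V" and yV: "y \<in> V"
    and e1: "{c1, Inl y} \<in> E'" and e2: "{c2, Inl y} \<in> E'"
    and d1: "FF (Inl x) c1 + 1 = DD x y" and d2: "FF (Inl x) c2 + 1 = DD x y"
    and fin: "DD x y \<noteq> \<infinity>"
  shows "c1 = c2"
proof -
  obtain g1 where g1: "{g1,y} \<in> E" "c1 = nb y g1" "dG x g1 + 1 = dG x y" using descG[OF xV yV e1 d1 fin] by blast
  obtain g2 where g2: "{g2,y} \<in> E" "c2 = nb y g2" "dG x g2 + 1 = dG x y" using descG[OF xV yV e2 d2 fin] by blast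
  have "g1 = g2" using geodetic_pred_unique[OF geo xV yV g1(1) g2(1) g1(3) g2(3)] DD_fin[OF fin] by blast
  then show ?thesis using g1 g2 by simp
qed


lemma add_min_enat: "(a::enat) + min b c = min (a + b) (a + c)"
  by (cases a; cases b; cases c) (auto simp: min_def)

lemma lowerInr:
  assumes s: "s = Inr (u0,v0,i0)" and nc: "\<And>j. c \<noteq> Inr (u0,v0,j)"
  shows "min (enat i0 + FF (Inl u0) c) (enat (k + 1 - i0) + FF (Inl v0) c) \<le> FF s c"
proof (cases c)
  case (Inl z) then show ?thesis using s by simp
next
  case (Inr r)
  then obtain w x j where c: "c = Inr (w,x,j)" by (cases r) auto
  have ne: "(u0,v0) \<noteq> (w,x)" using nc c by auto
  let ?K0 = "enat (k + 1 - i0)"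
  let ?Fu = "min (enat j + DD u0 w) (enat (k + 1 - j) + DD u0 x)"
  let ?Fv = "min (enat j + DD v0 w) (enat (k + 1 - j) + DD v0 x)"
  let ?R = "min (enat i0 + ?Fu) (?K0 + ?Fv)"
  have FFc: "FF s c = min (enat j + Phi s w) (enat (k + 1 - j) + Phi s x)"
    using c s srct_other[OF ne] by (simp add: CV_def)
  have Fu: "FF (Inl u0) c = ?Fu" and Fv: "FF (Inl v0) c = ?Fv" using c by (simp_all add: CV_def)
  have R1: "?R \<le> enat i0 + (enat j + DD u0 w)" "?R \<le> enat i0 + (enat (k + 1 - j) + DD u0 x)"
    by (simp_all add: min.coboundedI1 add_left_mono)
  have R2: "?R \<le> ?K0 + (enat j + DD v0 w)" "?R \<le> ?K0 + (enat (k + 1 - j) + DD v0 x)"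
    by (simp_all add: min.coboundedI2 add_left_mono)
  have A: "enat j + Phi s w = min (enat i0 + (enat j + DD u0 w)) (?K0 + (enat j + DD v0 w))"
    using s by (simp add: add_min_enat ac_simps)
  have B: "enat (k + 1 - j) + Phi s x = min (enat i0 + (enat (k + 1 - j) + DD u0 x)) (?K0 + (enat (k + 1 - j) + DD v0 x))"
    using s by (simp add: add_min_enat ac_simps)
  have "?R \<le> enat j + Phi s w" unfolding A using R1(1) R2(1) by simp
  moreover have "?R \<le> enat (k + 1 - j) + Phi s x" unfolding B using R1(2) R2(2) by simp
  ultimately show ?thesis unfolding FFc Fu Fv by simp
qed

lemma fin_contra: "(X::enat) + 1 = enat n \<Longrightarrow> enat n \<le> X \<Longrightarrow> False"
  by (cases X) (auto simp: one_enat_def)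

lemma not_src_chain:
  assumes e: "{c, Inl y} \<in> E'" and ne: "y \<noteq> u0" "y \<noteq> v0"
  shows "c \<noteq> Inr (u0,v0,j)"
proof
  assume c: "c = Inr (u0,v0,j)"
  from nbrInl[OF e] show False
  proof (elim disjE exE conjE)
    fix z assume "c = Inl z" then show False using c by simp
  next
    fix v assume "(y,v) \<in> CP" "c = sub_node k y v 1"
    then show False using c ne sub_node_eq_Inr[of y v 1 u0 v0 j] by auto
  next
    fix u assume "(u,y) \<in> CP" "c = sub_node k u y k"
    then show False using c ne sub_node_eq_Inr[of u y k u0 v0 j] by auto
  qed
qed

lemma descU_S:
  assumes s: "s = Inr (u0,v0,i0)" and sV: "s \<in> V'" and yS: "y \<in> S"
    and e: "{c, Inl y} \<in> E'" and nc: "\<And>j. c \<noteq> Inr (u0,v0,j)"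
    and d: "FF s c + 1 = FF s (Inl y)" and fin: "FF s (Inl y) \<noteq> \<infinity>"
  shows "FF (Inl u0) c + 1 = DD u0 y \<and> DD u0 y \<noteq> \<infinity>"
proof -
  have uv: "(u0,v0) \<in> CP" and i0: "1 \<le> i0" "i0 \<le> k" using sV s by auto
  have u0S: "u0 \<in> S" and v0T: "v0 \<in> T" using uv CP_iff by auto
  have uV: "u0 \<in> V" "v0 \<in> V" using CP_V uv by auto
  have Py: "FF s (Inl y) = enat i0 + DD u0 y"
    using PhiS(1)[OF s sV yS] cst_SS[OF u0S yS] by (simp add: DD_def zero_enat_def[symmetric])
  obtain du where du: "DD u0 y = enat du" using fin Py by (cases "DD u0 y") auto
  have duG: "dG u0 y = enat du" using du cst_SS[OF u0S yS] by (simp add: DD_def zero_enat_def[symmetric])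
  obtain f where f: "FF s c = enat f" "f + 1 = i0 + du"
    using d Py du by (cases "FF s c") (auto simp: one_enat_def)
  have low: "min (enat i0 + FF (Inl u0) c) (enat (k + 1 - i0) + FF (Inl v0) c) \<le> enat f"
    using lowerInr[OF s nc] f by simp
  have Lu: "DD u0 y \<le> FF (Inl u0) c + 1" using FF_lip[of "Inl u0" c "Inl y"] uV e by (simp add: insert_commute)
  have Lv: "DD v0 y \<le> FF (Inl v0) c + 1" using FF_lip[of "Inl v0" c "Inl y"] uV e by (simp add: insert_commute)
  show ?thesis
  proof (cases "enat i0 + FF (Inl u0) c \<le> enat (k + 1 - i0) + FF (Inl v0) c")
    case True
    then have "enat i0 + FF (Inl u0) c \<le> enat f" using low by simp
    then obtain a where a: "FF (Inl u0) c = enat a" "i0 + a \<le> f" by (cases "FF (Inl u0) c") auto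
    have "du \<le> a + 1" using Lu a du by (simp add: one_enat_def)
    then have "a + 1 = du" using a f by simp
    then show ?thesis using a du by (simp add: one_enat_def)
  next
    case False
    then have "enat (k + 1 - i0) + FF (Inl v0) c \<le> enat f" using low by (simp add: min_def)
    then obtain b where b: "FF (Inl v0) c = enat b" "k + 1 - i0 + b \<le> f" by (cases "FF (Inl v0) c") auto
    have "DD v0 y \<le> enat (b + 1)" using Lv b by (simp add: one_enat_def)
    then obtain dv where dv: "DD v0 y = enat dv" "dv \<le> b + 1" by (cases "DD v0 y") auto
    have dvG: "DD v0 y = dG v0 y + enat k" using cst_TS[OF v0T yS] by (simp add: DD_def)
    obtain gv where gv: "dG v0 y = enat gv" "dv = gv + k" using dv dvG by (cases "dG v0 y") auto
    have "dG y u0 \<le> dG y v0" by (rule lemmaP_S[OF yS uv])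
    then have "du \<le> gv" using duG gv dist_commute by (metis enat_ord_simps(1))
    then show ?thesis using f b dv gv i0 by linarith
  qed
qed

lemma descU_T:
  assumes s: "s = Inr (u0,v0,i0)" and sV: "s \<in> V'" and yT: "y \<in> T"
    and e: "{c, Inl y} \<in> E'" and nc: "\<And>j. c \<noteq> Inr (u0,v0,j)"
    and d: "FF s c + 1 = FF s (Inl y)" and fin: "FF s (Inl y) \<noteq> \<infinity>"
  shows "FF (Inl v0) c + 1 = DD v0 y \<and> DD v0 y \<noteq> \<infinity>"
proof -
  have uv: "(u0,v0) \<in> CP" and i0: "1 \<le> i0" "i0 \<le> k" using sV s by auto
  have u0S: "u0 \<in> S" and v0T: "v0 \<in> T" using uv CP_iff by auto
  have uV: "u0 \<in> V" "v0 \<in> V" using CP_V uv by auto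
  have Py: "FF s (Inl y) = enat (k + 1 - i0) + DD v0 y"
    using PhiS(2)[OF s sV yT] cst_TT[OF v0T yT] by (simp add: DD_def zero_enat_def[symmetric])
  obtain dv where dv: "DD v0 y = enat dv" using fin Py by (cases "DD v0 y") auto
  have dvG: "dG v0 y = enat dv" using dv cst_TT[OF v0T yT] by (simp add: DD_def zero_enat_def[symmetric])
  obtain f where f: "FF s c = enat f" "f + 1 = (k + 1 - i0) + dv"
    using d Py dv by (cases "FF s c") (auto simp: one_enat_def)
  have low: "min (enat i0 + FF (Inl u0) c) (enat (k + 1 - i0) + FF (Inl v0) c) \<le> enat f"
    using lowerInr[OF s nc] f by simp
  have Lu: "DD u0 y \<le> FF (Inl u0) c + 1" using FF_lip[of "Inl u0" c "Inl y"] uV e by (simp add: insert_commute)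
  have Lv: "DD v0 y \<le> FF (Inl v0) c + 1" using FF_lip[of "Inl v0" c "Inl y"] uV e by (simp add: insert_commute)
  show ?thesis
  proof (cases "enat (k + 1 - i0) + FF (Inl v0) c \<le> enat i0 + FF (Inl u0) c")
    case True
    then have "min (enat i0 + FF (Inl u0) c) (enat (k + 1 - i0) + FF (Inl v0) c) = enat (k + 1 - i0) + FF (Inl v0) c"
      by (rule min_absorb2)
    then have "enat (k + 1 - i0) + FF (Inl v0) c \<le> enat f" using low by simp
    then obtain b where b: "FF (Inl v0) c = enat b" "k + 1 - i0 + b \<le> f" by (cases "FF (Inl v0) c") auto
    have "dv \<le> b + 1" using Lv b dv by (simp add: one_enat_def)
    then have "b + 1 = dv" using b f by simp
    then show ?thesis using b dv by (simp add: one_enat_def)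
  next
    case False
    then have "min (enat i0 + FF (Inl u0) c) (enat (k + 1 - i0) + FF (Inl v0) c) = enat i0 + FF (Inl u0) c"
      by (intro min_absorb1) simp
    then have "enat i0 + FF (Inl u0) c \<le> enat f" using low by simp
    then obtain a where a: "FF (Inl u0) c = enat a" "i0 + a \<le> f" by (cases "FF (Inl u0) c") auto
    have "DD u0 y \<le> enat (a + 1)" using Lu a by (simp add: one_enat_def)
    then obtain du where du: "DD u0 y = enat du" "du \<le> a + 1" by (cases "DD u0 y") auto
    have duG: "DD u0 y = dG u0 y + enat k" using cst_ST[OF u0S yT] by (simp add: DD_def)
    obtain gu where gu: "dG u0 y = enat gu" "du = gu + k" using du duG by (cases "dG u0 y") auto
    have "dG y v0 \<le> dG y u0" by (rule lemmaP_T[OF yT uv])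
    then have "dv \<le> gu" using dvG gu dist_commute by (metis enat_ord_simps(1))
    then show ?thesis using f a du gu i0 by linarith
  qed
qed

end

context subdiv begin

lemma desc_at_u0:
  assumes s: "s = Inr (u0,v0,i0)" and sV: "s \<in> V'"
    and e: "{c, Inl u0} \<in> E'" and d: "FF s c + 1 = FF s (Inl u0)"
  shows "c = sub_node k u0 v0 1"
proof -
  have uv: "(u0,v0) \<in> CP" and i0: "1 \<le> i0" "i0 \<le> k" using sV s by auto
  have u0S: "u0 \<in> S" and v0T: "v0 \<in> T" using uv CP_iff by auto
  have uV: "u0 \<in> V" "v0 \<in> V" using CP_V uv by auto
  have Pu: "FF s (Inl u0) = enat i0" using PhiS(1)[OF s sV u0S] dist_self[OF uV(1)] by simp
  have dd: "FF s c + 1 = enat i0" using d Pu by simp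
  from nbrInl[OF e] show ?thesis
  proof (elim disjE exE conjE)
    fix z assume c: "c = Inl z" and uz: "{u0,z} \<in> E" and nc: "{u0,z} \<notin> cut_set E S T"
    have zS: "z \<in> S" using noncut_same[OF uz nc] u0S by simp
    have "enat i0 \<le> FF s c" using c PhiS(1)[OF s sV zS] by simp
    then show ?thesis using fin_contra dd by blast
  next
    fix v assume uv': "(u0,v) \<in> CP" and c: "c = sub_node k u0 v 1"
    show ?thesis
    proof (cases "v = v0")
      case True then show ?thesis using c by simp
    next
      case False
      have vT: "v \<in> T" using uv' CP_iff by auto
      have c': "c = Inr (u0,v,1)" using c i0 by (simp add: sub_node_def)
      have "FF s c = min (1 + Phi s u0) (enat k + Phi s v)"
        using c' s srct_other[of u0 v0 u0 v i0 1] False by (simp add: CV_def one_enat_def)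
      moreover have "Phi s u0 = enat i0" using Pu by simp
      moreover have "enat i0 \<le> enat k + Phi s v"
      proof -
        have "enat i0 \<le> enat k + enat (k + 1 - i0)" using i0 by simp
        also have "\<dots> \<le> enat k + Phi s v"
          by (rule add_left_mono) (simp add: PhiS(2)[OF s sV vT] add_increasing2)
        finally show ?thesis .
      qed
      ultimately have "enat i0 \<le> FF s c" by simp
      then show ?thesis using fin_contra dd by blast
    qed
  next
    fix u assume "(u,u0) \<in> CP" then show ?thesis using u0S disj CP_iff by auto
  qed
qed

lemma desc_at_v0:
  assumes s: "s = Inr (u0,v0,i0)" and sV: "s \<in> V'"
    and e: "{c, Inl v0} \<in> E'" and d: "FF s c + 1 = FF s (Inl v0)"
  shows "c = sub_node k u0 v0 k"
proof -
  have uv: "(u0,v0) \<in> CP" and i0: "1 \<le> i0" "i0 \<le> k" using sV s by auto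
  have u0S: "u0 \<in> S" and v0T: "v0 \<in> T" using uv CP_iff by auto
  have uV: "u0 \<in> V" "v0 \<in> V" using CP_V uv by auto
  have Pv: "FF s (Inl v0) = enat (k + 1 - i0)" using PhiS(2)[OF s sV v0T] dist_self[OF uV(2)] by simp
  have dd: "FF s c + 1 = enat (k + 1 - i0)" using d Pv by simp
  from nbrInl[OF e] show ?thesis
  proof (elim disjE exE conjE)
    fix z assume c: "c = Inl z" and uz: "{v0,z} \<in> E" and nc: "{v0,z} \<notin> cut_set E S T"
    have zV: "z \<in> V" using lipE[OF uz] by simp
    have zT: "z \<in> T" using noncut_same[OF uz nc] v0T side zV uV(2) by blast
    have "enat (k + 1 - i0) \<le> FF s c" using c PhiS(2)[OF s sV zT] by simp
    then show ?thesis using fin_contra dd by blast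
  next
    fix v assume "(v0,v) \<in> CP" then show ?thesis using v0T disj CP_iff by auto
  next
    fix u assume uv': "(u,v0) \<in> CP" and c: "c = sub_node k u v0 k"
    show ?thesis
    proof (cases "u = u0")
      case True then show ?thesis using c by simp
    next
      case False
      have uS: "u \<in> S" using uv' CP_iff by auto
      have c': "c = Inr (u,v0,k)" using c i0 by (simp add: sub_node_def)
      have "FF s c = min (enat k + Phi s u) (1 + Phi s v0)"
        using c' s srct_other[of u0 v0 u v0 i0 k] False by (simp add: CV_def one_enat_def)
      moreover have "Phi s v0 = enat (k + 1 - i0)" using Pv by simp
      moreover have "enat (k + 1 - i0) \<le> enat k + Phi s u"
      proof -
        have "enat (k + 1 - i0) \<le> enat k + enat i0" using i0 by simp
        also have "\<dots> \<le> enat k + Phi s u"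
          by (rule add_left_mono) (simp add: PhiS(1)[OF s sV uS] add_increasing2)
        finally show ?thesis .
      qed
      ultimately have "enat (k + 1 - i0) \<le> FF s c" by (simp add: add_increasing)
      then show ?thesis using fin_contra dd by blast
    qed
  qed
qed

lemma U_Inr_Inl:
  assumes s: "s = Inr (u0,v0,i0)" and sV: "s \<in> V'" and yV: "y \<in> V"
    and e1: "{c1, Inl y} \<in> E'" and e2: "{c2, Inl y} \<in> E'"
    and d1: "FF s c1 + 1 = FF s (Inl y)" and d2: "FF s c2 + 1 = FF s (Inl y)"
    and fin: "FF s (Inl y) \<noteq> \<infinity>"
  shows "c1 = c2"
proof -
  have uv: "(u0,v0) \<in> CP" using sV s by auto
  have uV: "u0 \<in> V" "v0 \<in> V" using CP_V uv by auto
  show ?thesis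
  proof (cases "y = u0")
    case True
    have e1': "{c1, Inl u0} \<in> E'" "{c2, Inl u0} \<in> E'" using e1 e2 True by simp_all
    have d1': "FF s c1 + 1 = FF s (Inl u0)" "FF s c2 + 1 = FF s (Inl u0)" using d1 d2 True by simp_all
    show ?thesis using desc_at_u0[OF s sV e1'(1) d1'(1)] desc_at_u0[OF s sV e1'(2) d1'(2)] by simp
  next
    case nu: False
    show ?thesis
    proof (cases "y = v0")
      case True
      have e1': "{c1, Inl v0} \<in> E'" "{c2, Inl v0} \<in> E'" using e1 e2 True by simp_all
      have d1': "FF s c1 + 1 = FF s (Inl v0)" "FF s c2 + 1 = FF s (Inl v0)" using d1 d2 True by simp_all
      show ?thesis using desc_at_v0[OF s sV e1'(1) d1'(1)] desc_at_v0[OF s sV e1'(2) d1'(2)] by simp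
    next
      case nv: False
      have nc1: "\<And>j. c1 \<noteq> Inr (u0,v0,j)" using not_src_chain[OF e1 nu nv] by blast
      have nc2: "\<And>j. c2 \<noteq> Inr (u0,v0,j)" using not_src_chain[OF e2 nu nv] by blast
      show ?thesis
      proof (cases "y \<in> S")
        case True
        have a: "FF (Inl u0) c1 + 1 = DD u0 y" "DD u0 y \<noteq> \<infinity>" using descU_S[OF s sV True e1 nc1 d1 fin] by auto
        have b: "FF (Inl u0) c2 + 1 = DD u0 y" using descU_S[OF s sV True e2 nc2 d2 fin] by auto
        show ?thesis by (rule U_Inl_src[OF uV(1) yV e1 e2 a(1) b a(2)])
      next
        case False
        then have yT: "y \<in> T" using side yV by blast
        have a: "FF (Inl v0) c1 + 1 = DD v0 y" "DD v0 y \<noteq> \<infinity>" using descU_T[OF s sV yT e1 nc1 d1 fin] by auto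
        have b: "FF (Inl v0) c2 + 1 = DD v0 y" using descU_T[OF s sV yT e2 nc2 d2 fin] by auto
        show ?thesis by (rule U_Inl_src[OF uV(2) yV e1 e2 a(1) b a(2)])
      qed
    qed
  qed
qed

lemma E'_V: "{y,z} \<in> E' \<Longrightarrow> z \<in> V'"
proof -
  assume e: "{y,z} \<in> E'"
  from e consider (A) a a' where "{y,z} = {Inl a, Inl a'}" "{a,a'} \<in> E"
    | (B) u v i where "{y,z} = {sub_node k u v i, sub_node k u v (Suc i)}" "(u,v) \<in> CP" "i \<le> k"
    unfolding subdiv_E_def by blast
  then show ?thesis
  proof cases
    case A then show ?thesis using lipE[OF A(2)] by (auto simp: doubleton_eq_iff)
  next
    case B then show ?thesis using sub_node_V'[OF B(2)] by (auto simp: doubleton_eq_iff)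
  qed
qed

lemma main: "geodetic V' E'"
proof (rule geodetic_crit)
  show "\<And>y z. {y, z} \<in> E' \<Longrightarrow> z \<in> V'" by (rule E'_V)
next
  fix a b c1 c2
  assume aV: "a \<in> V'" and bV: "b \<in> V'" and e1: "{c1, b} \<in> E'" and e2: "{c2, b} \<in> E'"
    and fin: "dist V' E' a b \<noteq> \<infinity>" and d1: "dist V' E' a c1 + 1 = dist V' E' a b"
    and d2: "dist V' E' a c2 + 1 = dist V' E' a b"
  have cV: "c1 \<in> V'" "c2 \<in> V'" using E'_V e1 e2 by (auto simp: insert_commute)
  have F: "FF a c1 + 1 = FF a b" "FF a c2 + 1 = FF a b" "FF a b \<noteq> \<infinity>"
    using d1 d2 fin FF_dist[OF aV] bV cV by auto
  show "c1 = c2"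
  proof (cases b)
    case (Inr r)
    then obtain w x j where b: "b = Inr (w,x,j)" by (cases r) auto
    have bV': "Inr (w,x,j) \<in> V'" using bV b by simp
    have e': "{c1, Inr (w,x,j)} \<in> E'" "{c2, Inr (w,x,j)} \<in> E'" using e1 e2 b by simp_all
    have F': "FF a c1 + 1 = FF a (Inr (w,x,j))" "FF a c2 + 1 = FF a (Inr (w,x,j))"
      "FF a (Inr (w,x,j)) \<noteq> \<infinity>" using F b by simp_all
    show ?thesis by (rule U_Inr[OF aV bV' e'(1) e'(2) F'(1) F'(2) F'(3)])
  next
    case (Inl y)
    have yV: "y \<in> V" using bV Inl by simp
    show ?thesis
    proof (cases a)
      case (Inl x)
      have xV: "x \<in> V" using aV Inl by simp
      show ?thesis using U_Inl_src[OF xV yV] e1 e2 F \<open>b = Inl y\<close> Inl by simp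
    next
      case (Inr r)
      then obtain u0 v0 i0 where s: "a = Inr (u0,v0,i0)" by (cases r) auto
      show ?thesis using U_Inr_Inl[OF s aV yV] e1 e2 F \<open>b = Inl y\<close> by simp
    qed
  qed
qed

end

theorem proposition1:
  fixes V :: "'a set" and E :: "'a set set" and S T :: "'a set" and k :: nat
  assumes "simple_graph V E"
    and "geodetic V E"
    and "S \<union> T = V" and "S \<inter> T = {}"
    and "geodetically_closed V E S" and "geodetically_closed V E T"
    and "\<And>u v w x. u \<in> S \<Longrightarrow> w \<in> S \<Longrightarrow> v \<in> T \<Longrightarrow> x \<in> T \<Longrightarrow>
           {u, v} \<in> E \<Longrightarrow> {w, x} \<in> E \<Longrightarrow> {u, v} \<noteq> {w, x} \<Longrightarrow>
           \<exists>n. dist V E u w + dist V E v x = enat n \<and> odd n"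
  shows "geodetic (subdiv_V V E S T k) (subdiv_E E S T k)"
proof -
  interpret subdiv V E S T k using assms by unfold_locales
  show ?thesis by (rule main)
qed


end
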